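(* Consider the $K$-class $N$-agent system and mean-field model described in the context, with constants $M_R,L_R,L_P,L_Q>0$ and discount factor $\gamma\in[0,1)$. Let $\mathbf{x}_0^{\mathbf{N}}$ be given (deterministic) initial states of all agents and $\boldsymbol{\mu}_0\in\mathcal{P}(\mathcal{X}\times[K])$ their empirical joint distribution. Define $S_R= M_R(1+L_Q)+L_R(2+L_Q)$, $S_P= (1+L_Q)+L_P(2+L_Q)$, $C_R= M_R+L_R$, $C_P= 2+L_P$. If $\gamma S_P<1$, then for every policy $\boldsymbol{\pi}\in\Pi$, $$\Big|v^{\mathbf{N}}(\mathbf{x}_0^{\mathbf{N}},\boldsymbol{\pi})-v^{\mathrm{MF}}(\boldsymbol{\mu}_0,\boldsymbol{\pi})\Big|\le \frac{C_R}{1-\gamma}\sqrt{|\mathcal{U}|}\,\frac{1}{N_{\mathrm{pop}}}\Big(\sum_{k\in[K]}\sqrt{N_k}\Big)+C_P\Big(\frac{S_R}{S_P-1}\Big)\sqrt{|\mathcal{X}||\mathcal{U}|}\,\frac{1}{N_{\mathrm{pop}}}\Big(\sum_{k\in[K]}\sqrt{N_k}\Big)\Big[\frac{1}{1-\gamma S_P}-\frac{1}{1-\gamma}\Big].$$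
   Context: Fix integers $K\ge1$, $N_1,\dots,N_K\ge1$, write $[K]=\{1,\dots,K\}$, $N_{\mathrm{pop}}=\sum_{k}N_k$, $\mathbf{N}=(N_k)_k$, and let $\mathcal{X},\mathcal{U}$ be finite state and action sets. For a finite set $A$, $\mathcal{P}(A)$ is the set of probability distributions on $A$, and $|\cdot|_1$ is the $L_1$ norm. Agent $j\in[N_k]$ of class $k$ has state $x_{j,k}^{t}\in\mathcal{X}$ and action $u_{j,k}^{t}\in\mathcal{U}$ at time $t\in\{0,1,\dots\}$; $\mathbf{x}_t^{\mathbf{N}},\mathbf{u}_t^{\mathbf{N}}$ denote all states/actions at time $t$. Empirical joint distributions: $\boldsymbol{\mu}_t^{\mathbf{N}}(x,k)=\frac{1}{N_{\mathrm{pop}}}\sum_{j=1}^{N_k}\mathbf 1(x_{j,k}^t=x)$, $\boldsymbol{\nu}_t^{\mathbf{N}}(u,k)=\frac{1}{N_{\mathrm{pop}}}\sum_{j=1}^{N_k}\mathbf 1(u_{j,k}^t=u)$, elements of $\mathcal{P}(\mathcal{X}\times[K])$ and $\mathcal{P}(\mathcal{U}\times[K])$. For each $k$ there are a reward function $r_k:\mathcal{X}\times\mathcal{U}\times\mathcal{P}(\mathcal{X}\times[K])\times\mathcal{P}(\mathcal{U}\times[K])\to\mathbb{R}$ and a transition law $P_k:\mathcal{X}\times\mathcal{U}\times\mathcal{P}(\mathcal{X}\times[K])\times\mathcal{P}(\mathcal{U}\times[K])\to\mathcal{P}(\mathcal{X})$ such that for all $x,u,k,\boldsymbol\mu_1,\boldsymbol\mu_2,\boldsymbol\nu_1,\boldsymbol\nu_2$: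 $|r_k(x,u,\boldsymbol\mu_1,\boldsymbol\nu_1)|\le M_R$, $|r_k(x,u,\boldsymbol\mu_1,\boldsymbol\nu_1)-r_k(x,u,\boldsymbol\mu_2,\boldsymbol\nu_2)|\le L_R(|\boldsymbol\mu_1-\boldsymbol\mu_2|_1+|\boldsymbol\nu_1-\boldsymbol\nu_2|_1)$, $|P_k(x,u,\boldsymbol\mu_1,\boldsymbol\nu_1)-P_k(x,u,\boldsymbol\mu_2,\boldsymbol\nu_2)|_1\le L_P(|\boldsymbol\mu_1-\boldsymbol\mu_2|_1+|\boldsymbol\nu_1-\boldsymbol\nu_2|_1)$. A policy is $\boldsymbol\pi=\{\boldsymbol\pi_t\}_{t\ge0}$, $\boldsymbol\pi_t=(\pi_k^t)_{k\in[K]}$, with decision rules $\pi_k^t:\mathcal{X}\times\mathcal{P}(\mathcal{X}\times[K])\to\mathcal{P}(\mathcal{U})$. $\Pi$ is the set of policies with $|\pi_k^t(x,\boldsymbol\mu_1)-\pi_k^t(x,\boldsymbol\mu_2)|_1\le L_Q|\boldsymbol\mu_1-\boldsymbol\mu_2|_1$ for all $t,k,x,\boldsymbol\mu_1,\boldsymbol\mu_2$. Dynamics of the $\mathbf N$-agent system under $\boldsymbol\pi$: conditioned on $\mathbf{x}_t^{\mathbf{N}}$, actions are drawn independently across agents with $u_{j,k}^t\sim\pi_k^t(x_{j,k}^t,\boldsymbol\mu_t^{\mathbf N})$; conditioned on $\mathbf{x}_t^{\mathbf{N}},\mathbf{u}_t^{\mathbf{N}}$, next states are drawn independently across agents with $x_{j,k}^{t+1}\sim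 P_k(x_{j,k}^t,u_{j,k}^t,\boldsymbol\mu_t^{\mathbf N},\boldsymbol\nu_t^{\mathbf N})$. Empirical value: $v^{\mathbf N}(\mathbf x_0^{\mathbf N},\boldsymbol\pi)=\frac{1}{N_{\mathrm{pop}}}\sum_k\sum_{j=1}^{N_k}\mathbb E\big[\sum_{t\ge0}\gamma^t r_k(x_{j,k}^t,u_{j,k}^t,\boldsymbol\mu_t^{\mathbf N},\boldsymbol\nu_t^{\mathbf N})\big]$. Mean-field operators for $\boldsymbol\mu\in\mathcal P(\mathcal X\times[K])$ and a collection $\boldsymbol\pi=(\pi_k)_k$ of decision rules: $\nu^{\mathrm{MF}}(\boldsymbol\mu,\boldsymbol\pi)(u,k)=\sum_x\pi_k(x,\boldsymbol\mu)(u)\boldsymbol\mu(x,k)$; $P^{\mathrm{MF}}(\boldsymbol\mu,\boldsymbol\pi)(x',k)=\sum_{x,u}\boldsymbol\mu(x,k)\pi_k(x,\boldsymbol\mu)(u)P_k(x,u,\boldsymbol\mu,\nu^{\mathrm{MF}}(\boldsymbol\mu,\boldsymbol\pi))(x')$; $r_k^{\mathrm{MF}}(\boldsymbol\mu,\boldsymbol\pi)=\sum_{x,u}\boldsymbol\mu(x,k)\pi_k(x,\boldsymbol\mu)(u)r_k(x,u,\boldsymbol\mu,\nu^{\mathrm{MF}}(\boldsymbol\mu,\boldsymbol\pi))$. Mean-field value: with $\boldsymbol\mu_{t+1}=P^{\mathrm{MF}}(\boldsymbol\mu_t,\boldsymbol\pi_t)$, $v^{\mathrm{MF}}(\boldsymbol\mu_0,\boldsymbol\pi)=\sum_k\sum_{t\ge0}\gamma^t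 r_k^{\mathrm{MF}}(\boldsymbol\mu_t,\boldsymbol\pi_t)$. *)

theory Defs
  imports "HOL-Probability.Probability"
begin

(* Classes [K] are the elements of a finite type 'k (K = CARD('k)); states 'x and
   actions 'u are finite types. Agent j of class k is indexed by (k, j), j \<in> {1..N k}.
   Distributions on X \<times> [K] (resp. U \<times> [K]) are real functions on 'x \<times> 'k. *)

definition dist_simplex :: "('a::finite \<Rightarrow> real) set" where
  "dist_simplex = {\<mu>. (\<forall>z. 0 \<le> \<mu> z) \<and> (\<Sum>z\<in>UNIV. \<mu> z) = 1}"

definition l1 :: "('a::finite \<Rightarrow> real) \<Rightarrow> ('a \<Rightarrow> real) \<Rightarrow> real" where
  "l1 f g = (\<Sum>z\<in>UNIV. \<bar>f z - g z\<bar>)"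

definition l1_pmf :: "'a::finite pmf \<Rightarrow> 'a pmf \<Rightarrow> real" where
  "l1_pmf p q = (\<Sum>z\<in>UNIV. \<bar>pmf p z - pmf q z\<bar>)"

definition Npop :: "('k::finite \<Rightarrow> nat) \<Rightarrow> nat" where
  "Npop N = (\<Sum>k\<in>UNIV. N k)"

definition agents :: "('k::finite \<Rightarrow> nat) \<Rightarrow> ('k \<times> nat) set" where
  "agents N = (SIGMA k:UNIV. {1..N k})"

definition emp :: "('k::finite \<Rightarrow> nat) \<Rightarrow> ('k \<times> nat \<Rightarrow> 'a) \<Rightarrow> ('a \<times> 'k \<Rightarrow> real)" where
  "emp N c = (\<lambda>(a, k). (\<Sum>j\<in>{1..N k}. if c (k, j) = a then 1 else 0) / real (Npop N))"

type_synonym ('x,'k) dmeas = "'x \<times> 'k \<Rightarrow> real"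
type_synonym ('x,'u,'k) policy = "nat \<Rightarrow> 'k \<Rightarrow> 'x \<Rightarrow> ('x,'k) dmeas \<Rightarrow> 'u pmf"
type_synonym ('x,'u,'k) trans = "'k \<Rightarrow> 'x \<Rightarrow> 'u \<Rightarrow> ('x,'k) dmeas \<Rightarrow> ('u,'k) dmeas \<Rightarrow> 'x pmf"
type_synonym ('x,'u,'k) rew = "'k \<Rightarrow> 'x \<Rightarrow> 'u \<Rightarrow> ('x,'k) dmeas \<Rightarrow> ('u,'k) dmeas \<Rightarrow> real"

definition Pi_class :: "real \<Rightarrow> ('x::finite,'u::finite,'k::finite) policy set" where
  "Pi_class LQ = {\<pi>. \<forall>t k x \<mu>1 \<mu>2. \<mu>1 \<in> dist_simplex \<longrightarrow> \<mu>2 \<in> dist_simplex \<longrightarrow>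
      l1_pmf (\<pi> t k x \<mu>1) (\<pi> t k x \<mu>2) \<le> LQ * l1 \<mu>1 \<mu>2}"

definition act_pmf :: "('k::finite \<Rightarrow> nat) \<Rightarrow> ('x,'u,'k) policy \<Rightarrow> nat \<Rightarrow> ('k \<times> nat \<Rightarrow> 'x)
    \<Rightarrow> ('k \<times> nat \<Rightarrow> 'u) pmf" where
  "act_pmf N \<pi> t xs = Pi_pmf (agents N) undefined
     (\<lambda>(k, j). \<pi> t k (xs (k, j)) (emp N xs))"

definition next_pmf :: "('k::finite \<Rightarrow> nat) \<Rightarrow> ('x,'u,'k) trans \<Rightarrow> ('k \<times> nat \<Rightarrow> 'x)
    \<Rightarrow> ('k \<times> nat \<Rightarrow> 'u) \<Rightarrow> ('k \<times> nat \<Rightarrow> 'x) pmf" where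
  "next_pmf N P xs us = Pi_pmf (agents N) undefined
     (\<lambda>(k, j). P k (xs (k, j)) (us (k, j)) (emp N xs) (emp N us))"

primrec joint_dist :: "('k::finite \<Rightarrow> nat) \<Rightarrow> ('x,'u,'k) trans \<Rightarrow> ('x,'u,'k) policy
    \<Rightarrow> ('k \<times> nat \<Rightarrow> 'x) \<Rightarrow> nat \<Rightarrow> (('k \<times> nat \<Rightarrow> 'x) \<times> ('k \<times> nat \<Rightarrow> 'u)) pmf" where
  "joint_dist N P \<pi> x0 0 = map_pmf (\<lambda>us. (x0, us)) (act_pmf N \<pi> 0 x0)"
| "joint_dist N P \<pi> x0 (Suc t) =
     bind_pmf (joint_dist N P \<pi> x0 t) (\<lambda>(xs, us).
       bind_pmf (next_pmf N P xs us) (\<lambda>xs'.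
         map_pmf (\<lambda>us'. (xs', us')) (act_pmf N \<pi> (Suc t) xs')))"

(* empirical value; E[\<Sum>_t \<gamma>^t r] written as \<Sum>_t \<gamma>^t E[r] (bounded rewards) *)
definition vN :: "('k::finite \<Rightarrow> nat) \<Rightarrow> ('x::finite,'u::finite,'k) trans \<Rightarrow> ('x,'u,'k) rew
    \<Rightarrow> real \<Rightarrow> ('k \<times> nat \<Rightarrow> 'x) \<Rightarrow> ('x,'u,'k) policy \<Rightarrow> real" where
  "vN N P r \<gamma> x0 \<pi> = (1 / real (Npop N)) *
     (\<Sum>k\<in>UNIV. \<Sum>j\<in>{1..N k}. \<Sum>t. \<gamma> ^ t *
        measure_pmf.expectation (joint_dist N P \<pi> x0 t)
          (\<lambda>(xs, us). r k (xs (k, j)) (us (k, j)) (emp N xs) (emp N us)))"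

definition nu_MF :: "('x::finite,'k::finite) dmeas \<Rightarrow> ('k \<Rightarrow> 'x \<Rightarrow> ('x,'k) dmeas \<Rightarrow> 'u pmf)
    \<Rightarrow> ('u,'k) dmeas" where
  "nu_MF \<mu> \<pi> = (\<lambda>(u, k). \<Sum>x\<in>UNIV. pmf (\<pi> k x \<mu>) u * \<mu> (x, k))"

definition P_MF :: "('x,'u,'k) trans \<Rightarrow> ('x::finite,'k::finite) dmeas
    \<Rightarrow> ('k \<Rightarrow> 'x \<Rightarrow> ('x,'k) dmeas \<Rightarrow> 'u::finite pmf) \<Rightarrow> ('x,'k) dmeas" where
  "P_MF P \<mu> \<pi> = (\<lambda>(x', k). \<Sum>x\<in>UNIV. \<Sum>u\<in>UNIV.
      \<mu> (x, k) * pmf (\<pi> k x \<mu>) u * pmf (P k x u \<mu> (nu_MF \<mu> \<pi>)) x')"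

definition r_MF :: "('x,'u,'k) rew \<Rightarrow> 'k \<Rightarrow> ('x::finite,'k::finite) dmeas
    \<Rightarrow> ('k \<Rightarrow> 'x \<Rightarrow> ('x,'k) dmeas \<Rightarrow> 'u::finite pmf) \<Rightarrow> real" where
  "r_MF r k \<mu> \<pi> = (\<Sum>x\<in>UNIV. \<Sum>u\<in>UNIV.
      \<mu> (x, k) * pmf (\<pi> k x \<mu>) u * r k x u \<mu> (nu_MF \<mu> \<pi>))"

primrec mf_seq :: "('x,'u,'k) trans \<Rightarrow> ('x::finite,'k::finite) dmeas \<Rightarrow> ('x,'u::finite,'k) policy
    \<Rightarrow> nat \<Rightarrow> ('x,'k) dmeas" where
  "mf_seq P \<mu>0 \<pi> 0 = \<mu>0"
| "mf_seq P \<mu>0 \<pi> (Suc t) = P_MF P (mf_seq P \<mu>0 \<pi> t) (\<pi> t)"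

definition vMF :: "('x::finite,'u::finite,'k::finite) trans \<Rightarrow> ('x,'u,'k) rew \<Rightarrow> real
    \<Rightarrow> ('x,'k) dmeas \<Rightarrow> ('x,'u,'k) policy \<Rightarrow> real" where
  "vMF P r \<gamma> \<mu>0 \<pi> = (\<Sum>k\<in>UNIV. \<Sum>t. \<gamma> ^ t * r_MF r k (mf_seq P \<mu>0 \<pi> t) (\<pi> t))"

end

theory Submission
  imports Defs
begin


lemma integral_bind_pmf_bdd:
  fixes f :: "'b \<Rightarrow> real"
  assumes "\<And>x. \<bar>f x\<bar> \<le> B"
  shows "measure_pmf.expectation (bind_pmf p q) f = measure_pmf.expectation p (\<lambda>x. measure_pmf.expectation (q x) f)"
  unfolding measure_pmf_bind
  by (rule integral_bind[where K="count_space UNIV" and B=B and B'=1]) (auto intro: assms simp: measure_pmf.emeasure_space_1 measure_pmf_in_subprob_algebra measure_pmf.finite_measure_axioms)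

lemma int_bdd: fixes f :: "'a \<Rightarrow> real" assumes "\<And>x. \<bar>f x\<bar> \<le> B" shows "integrable (measure_pmf p) f"
  by (rule measure_pmf.integrable_const_bound[where B=B]) (auto simp: assms)

lemma exp_bdd: fixes f :: "'a \<Rightarrow> real" assumes "\<And>x. \<bar>f x\<bar> \<le> B"
  shows "\<bar>measure_pmf.expectation p f\<bar> \<le> B"
proof -
  have "\<bar>measure_pmf.expectation p f\<bar> \<le> measure_pmf.expectation p (\<lambda>x. \<bar>f x\<bar>)"
    by (rule integral_abs_bound)
  also have "\<dots> \<le> measure_pmf.expectation p (\<lambda>x. B)"
    by (rule integral_mono) (auto intro: int_bdd assms)
  also have "\<dots> = B" by simp
  finally show ?thesis .
qed

lemma exp_abs_le_sqrt:
  fixes X :: "'a \<Rightarrow> real" assumes B: "\<And>x. \<bar>X x\<bar> \<le> B"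
  shows "measure_pmf.expectation p (\<lambda>x. \<bar>X x\<bar>) \<le> sqrt (measure_pmf.expectation p (\<lambda>x. (X x)^2))"
proof -
  define c where "c = measure_pmf.expectation p (\<lambda>x. \<bar>X x\<bar>)"
  have c0: "c \<ge> 0" unfolding c_def by (rule integral_nonneg_AE) auto
  have i1: "integrable p (\<lambda>x. \<bar>X x\<bar>)" by (rule int_bdd[where B=B]) (use B in auto)
  have i2: "integrable p (\<lambda>x. (X x)^2)"
  proof (rule int_bdd[where B="B^2"])
    fix x show "\<bar>(X x)^2\<bar> \<le> B^2" using power_mono[OF B[of x] abs_ge_zero, of 2] by simp
  qed
  have eq: "(\<lambda>x. (\<bar>X x\<bar> - c)^2) = (\<lambda>x. (X x)^2 + ((- (2*c)) * \<bar>X x\<bar> + c^2))"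
    by (rule ext) (simp add: power2_diff)
  have "0 \<le> measure_pmf.expectation p (\<lambda>x. (\<bar>X x\<bar> - c)^2)"
    by (rule integral_nonneg_AE) auto
  also have "\<dots> = measure_pmf.expectation p (\<lambda>x. (X x)^2) + ((- (2*c)) * c + c^2)"
    unfolding eq using i1 i2 by (simp add: Bochner_Integration.integral_add c_def)
  finally have "c^2 \<le> measure_pmf.expectation p (\<lambda>x. (X x)^2)" by (simp add: power2_eq_square)
  then have "sqrt (c^2) \<le> sqrt (measure_pmf.expectation p (\<lambda>x. (X x)^2))" by (rule real_sqrt_le_mono)
  then show ?thesis using c0 by (simp add: c_def)
qed

lemma Pi_marg:
  fixes F :: "'b \<Rightarrow> real"
  assumes fin: "finite I" and i: "i \<in> I"
  shows "measure_pmf.expectation (Pi_pmf I d p) (\<lambda>\<omega>. F (\<omega> i)) = measure_pmf.expectation (p i) F"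
proof -
  have "measure_pmf.expectation (Pi_pmf I d p) (\<lambda>\<omega>. F (\<omega> i)) = measure_pmf.expectation (map_pmf (\<lambda>f. f i) (Pi_pmf I d p)) F"
    by simp
  also have "\<dots> = measure_pmf.expectation (p i) F"
    using Pi_pmf_component[OF fin, of i d p] i by simp
  finally show ?thesis .
qed

lemma Pi_finite_supp:
  fixes p :: "'i \<Rightarrow> 'b::finite pmf"
  assumes fin: "finite I"
  shows "finite (set_pmf (Pi_pmf I d p))"
proof -
  have "finite (PiE_dflt I d (\<lambda>i. set_pmf (p i)))" using fin by (intro finite_PiE_dflt) auto
  then show ?thesis by (simp add: set_Pi_pmf[OF fin, of d p] o_def)
qed

lemma Pi_pair:
  fixes p :: "'i \<Rightarrow> 'b::finite pmf" and g :: "'i \<Rightarrow> 'b \<Rightarrow> real"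
  assumes fin: "finite I" and i: "i \<in> I" and l: "l \<in> I" and il: "i \<noteq> l"
    and g0: "\<And>i y. 0 \<le> g i y"
  shows "measure_pmf.expectation (Pi_pmf I d p) (\<lambda>\<omega>. g i (\<omega> i) * g l (\<omega> l))
       = measure_pmf.expectation (p i) (g i) * measure_pmf.expectation (p l) (g l)"
proof -
  define f where "f = (\<lambda>x y. if x = i then g i y else if x = l then g l y else 1)"
  have pr: "(\<Prod>x\<in>I. F x) = F i * F l * (\<Prod>x\<in>I - {i} - {l}. F x)" for F :: "'i \<Rightarrow> real"
  proof -
    have "(\<Prod>x\<in>I. F x) = F i * (\<Prod>x\<in>I - {i}. F x)" by (rule prod.remove[OF fin i])
    also have "(\<Prod>x\<in>I - {i}. F x) = F l * (\<Prod>x\<in>I - {i} - {l}. F x)"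
      by (rule prod.remove) (use fin l il in auto)
    finally show ?thesis by simp
  qed
  have "measure_pmf.expectation (Pi_pmf I d p) (\<lambda>\<omega>. \<Prod>x\<in>I. f x (\<omega> x))
      = (\<Prod>x\<in>I. measure_pmf.expectation (p x) (\<lambda>v. f x v))"
    by (rule expectation_prod_Pi_pmf[OF fin]) (auto simp: f_def g0 intro!: integrable_measure_pmf_finite)
  moreover have "(\<lambda>\<omega>. \<Prod>x\<in>I. f x (\<omega> x)) = (\<lambda>\<omega>. g i (\<omega> i) * g l (\<omega> l))"
    by (rule ext, subst pr) (use il in \<open>simp add: f_def\<close>)
  moreover have "(\<Prod>x\<in>I. measure_pmf.expectation (p x) (\<lambda>v. f x v)) =
     measure_pmf.expectation (p i) (g i) * measure_pmf.expectation (p l) (g l)"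
    by (subst pr) (use il in \<open>simp add: f_def\<close>)
  ultimately show ?thesis by simp
qed

lemma core:
  fixes p :: "'i \<Rightarrow> 'b::finite pmf" and g :: "'i \<Rightarrow> 'b \<Rightarrow> real"
  assumes fin: "finite I" and J: "J \<subseteq> I" and g0: "\<And>i y. 0 \<le> g i y" and g1: "\<And>i y. g i y \<le> 1"
  shows "measure_pmf.expectation (Pi_pmf I d p) (\<lambda>\<omega>. \<bar>\<Sum>i\<in>J. (g i (\<omega> i) - measure_pmf.expectation (p i) (g i))\<bar>)
     \<le> sqrt (\<Sum>i\<in>J. measure_pmf.expectation (p i) (g i))"
proof -
  define Q where "Q = Pi_pmf I d p"
  define m where "m i = measure_pmf.expectation (p i) (g i)" for i
  have finQ: "finite (set_pmf Q)" unfolding Q_def by (rule Pi_finite_supp[OF fin])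
  have intQ[simp]: "integrable (measure_pmf Q) f" for f :: "_ \<Rightarrow> real"
    by (rule integrable_measure_pmf_finite[OF finQ])
  have intp[simp]: "integrable (measure_pmf (p i)) f" for i and f :: "'b \<Rightarrow> real"
    by (rule integrable_measure_pmf_finite) simp
  have finJ: "finite J" using fin J finite_subset by auto
  define X where "X \<omega> = (\<Sum>i\<in>J. (g i (\<omega> i) - m i))" for \<omega>
  have m0: "0 \<le> m i" for i unfolding m_def by (rule integral_nonneg_AE) (auto intro: g0)
  have m1: "m i \<le> 1" for i
  proof -
    have "\<bar>m i\<bar> \<le> 1" unfolding m_def by (rule exp_bdd) (use g0 g1 in \<open>auto simp: abs_le_iff intro: order_trans[OF _ g0]\<close>)
    then show ?thesis by simp
  qed
  have Xb: "\<bar>X \<omega>\<bar> \<le> real (card J)" for \<omega>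
  proof -
    have "\<bar>X \<omega>\<bar> \<le> (\<Sum>i\<in>J. \<bar>g i (\<omega> i) - m i\<bar>)" unfolding X_def by (rule sum_abs)
    also have "\<dots> \<le> (\<Sum>i\<in>J. 1)"
    proof (rule sum_mono)
      fix i show "\<bar>g i (\<omega> i) - m i\<bar> \<le> 1" using g0[of i "\<omega> i"] g1[of i "\<omega> i"] m0[of i] m1[of i] by linarith
    qed
    finally show ?thesis by simp
  qed
  have step1: "measure_pmf.expectation Q (\<lambda>\<omega>. \<bar>X \<omega>\<bar>) \<le> sqrt (measure_pmf.expectation Q (\<lambda>\<omega>. (X \<omega>)^2))"
    by (rule exp_abs_le_sqrt[where B = "real (card J)"]) (rule Xb)
  have sq: "(X \<omega>)^2 = (\<Sum>i\<in>J. \<Sum>l\<in>J. (g i (\<omega> i) - m i) * (g l (\<omega> l) - m l))" for \<omega>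
    unfolding X_def power2_eq_square sum_product ..
  have cross: "measure_pmf.expectation Q (\<lambda>\<omega>. (g i (\<omega> i) - m i) * (g l (\<omega> l) - m l)) = 0"
    if il: "i \<in> J" "l \<in> J" "i \<noteq> l" for i l
  proof -
    have "(\<lambda>\<omega>. (g i (\<omega> i) - m i) * (g l (\<omega> l) - m l)) =
        (\<lambda>\<omega>. g i (\<omega> i) * g l (\<omega> l) - m l * g i (\<omega> i) - m i * g l (\<omega> l) + m i * m l)"
      by (rule ext) (simp add: algebra_simps)
    then have "measure_pmf.expectation Q (\<lambda>\<omega>. (g i (\<omega> i) - m i) * (g l (\<omega> l) - m l)) =
       measure_pmf.expectation Q (\<lambda>\<omega>. g i (\<omega> i) * g l (\<omega> l)) - m l * measure_pmf.expectation Q (\<lambda>\<omega>. g i (\<omega> i))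
       - m i * measure_pmf.expectation Q (\<lambda>\<omega>. g l (\<omega> l)) + m i * m l"
      by (simp add: Bochner_Integration.integral_add Bochner_Integration.integral_diff)
    also have "\<dots> = 0"
    proof -
      have iI: "i \<in> I" and lI: "l \<in> I" using il J by auto
      show ?thesis
        using Pi_pair[OF fin iI lI il(3) g0, of d p] Pi_marg[OF fin iI, of d p "g i"] Pi_marg[OF fin lI, of d p "g l"]
        by (simp add: Q_def m_def)
    qed
    finally show ?thesis .
  qed
  have diag: "measure_pmf.expectation Q (\<lambda>\<omega>. (g i (\<omega> i) - m i) * (g i (\<omega> i) - m i)) \<le> m i"
    if i: "i \<in> J" for i
  proof -
    have "measure_pmf.expectation Q (\<lambda>\<omega>. (g i (\<omega> i) - m i) * (g i (\<omega> i) - m i))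
        = measure_pmf.expectation (p i) (\<lambda>y. (g i y - m i) * (g i y - m i))"
      unfolding Q_def by (rule Pi_marg[OF fin]) (use i J in auto)
    also have "\<dots> \<le> measure_pmf.expectation (p i) (\<lambda>y. g i y - 2 * m i * g i y + m i * m i)"
    proof (rule integral_mono)
      fix y
      have h1: "g i y * g i y \<le> g i y" by (rule mult_right_le_one_le[OF g0 g0 g1])
      have h2: "(g i y - m i) * (g i y - m i) = g i y * g i y - 2 * m i * g i y + m i * m i"
        by (simp add: algebra_simps)
      show "(g i y - m i) * (g i y - m i) \<le> g i y - 2 * m i * g i y + m i * m i" using h1 h2 by linarith
    qed auto
    also have "\<dots> = m i - 2 * m i * m i + m i * m i"
      by (simp add: Bochner_Integration.integral_add Bochner_Integration.integral_diff m_def)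
    also have "\<dots> \<le> m i" using mult_nonneg_nonneg[OF m0[of i] m0[of i]] by linarith
    finally show ?thesis .
  qed
  have EX2: "measure_pmf.expectation Q (\<lambda>\<omega>. (X \<omega>)^2) \<le> (\<Sum>i\<in>J. m i)"
  proof -
    have "measure_pmf.expectation Q (\<lambda>\<omega>. (X \<omega>)^2) =
       (\<Sum>i\<in>J. \<Sum>l\<in>J. measure_pmf.expectation Q (\<lambda>\<omega>. (g i (\<omega> i) - m i) * (g l (\<omega> l) - m l)))"
      unfolding sq by (simp add: Bochner_Integration.integral_sum)
    also have "\<dots> = (\<Sum>i\<in>J. measure_pmf.expectation Q (\<lambda>\<omega>. (g i (\<omega> i) - m i) * (g i (\<omega> i) - m i)))"
    proof (rule sum.cong[OF refl])
      fix i assume i: "i \<in> J"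
      have "(\<Sum>l\<in>J. measure_pmf.expectation Q (\<lambda>\<omega>. (g i (\<omega> i) - m i) * (g l (\<omega> l) - m l))) =
         measure_pmf.expectation Q (\<lambda>\<omega>. (g i (\<omega> i) - m i) * (g i (\<omega> i) - m i)) +
         (\<Sum>l\<in>J-{i}. measure_pmf.expectation Q (\<lambda>\<omega>. (g i (\<omega> i) - m i) * (g l (\<omega> l) - m l)))"
        by (rule sum.remove[OF finJ i])
      also have "(\<Sum>l\<in>J-{i}. measure_pmf.expectation Q (\<lambda>\<omega>. (g i (\<omega> i) - m i) * (g l (\<omega> l) - m l))) = 0"
        by (rule sum.neutral) (use cross i in auto)
      finally show "(\<Sum>l\<in>J. measure_pmf.expectation Q (\<lambda>\<omega>. (g i (\<omega> i) - m i) * (g l (\<omega> l) - m l))) =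
         measure_pmf.expectation Q (\<lambda>\<omega>. (g i (\<omega> i) - m i) * (g i (\<omega> i) - m i))" by simp
    qed
    also have "\<dots> \<le> (\<Sum>i\<in>J. m i)" by (rule sum_mono) (rule diag)
    finally show ?thesis .
  qed
  have "measure_pmf.expectation Q (\<lambda>\<omega>. \<bar>X \<omega>\<bar>) \<le> sqrt (\<Sum>i\<in>J. m i)"
    using step1 real_sqrt_le_mono[OF EX2] by linarith
  then show ?thesis by (simp add: Q_def X_def m_def)
qed

lemma sum_sqrt_le:
  fixes f :: "'a \<Rightarrow> real"
  assumes "\<And>a. a \<in> A \<Longrightarrow> 0 \<le> f a"
  shows "(\<Sum>a\<in>A. sqrt (f a)) \<le> sqrt (real (card A) * (\<Sum>a\<in>A. f a))"
proof -
  have "(\<Sum>a\<in>A. 1 * sqrt (f a))^2 \<le> (\<Sum>a\<in>A. 1^2) * (\<Sum>a\<in>A. (sqrt (f a))^2)"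
    by (rule Cauchy_Schwarz_ineq_sum)
  moreover have "(\<Sum>a\<in>A. (sqrt (f a))^2) = (\<Sum>a\<in>A. f a)"
    by (rule sum.cong) (use assms in auto)
  ultimately have "(\<Sum>a\<in>A. sqrt (f a))^2 \<le> real (card A) * (\<Sum>a\<in>A. f a)" by simp
  then show ?thesis by (rule real_le_rsqrt)
qed

lemma sum_pair_UNIV:
  "(\<Sum>z\<in>(UNIV::('a::finite \<times> 'b::finite) set). h z) = (\<Sum>b\<in>UNIV. \<Sum>a\<in>UNIV. h (a,b))"
proof -
  have "(\<Sum>z\<in>(UNIV::('a \<times> 'b) set). h z) = (\<Sum>z\<in>UNIV \<times> UNIV. h z)" by simp
  also have "\<dots> = (\<Sum>a\<in>UNIV. \<Sum>b\<in>UNIV. h (a,b))" by (simp add: sum.cartesian_product)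
  also have "\<dots> = (\<Sum>b\<in>UNIV. \<Sum>a\<in>UNIV. h (a,b))" by (rule sum.swap)
  finally show ?thesis .
qed

lemma exp_fin:
  fixes p :: "'a::finite pmf" and f :: "'a \<Rightarrow> real"
  shows "measure_pmf.expectation p f = (\<Sum>y\<in>UNIV. pmf p y * f y)"
  by (subst integral_measure_pmf_real[where A=UNIV]) (auto simp: mult.commute)

lemma finite_agents: "finite (agents (N::'k::finite \<Rightarrow> nat))"
  unfolding agents_def by (intro finite_SigmaI) auto

lemma conc:
  fixes q :: "'k::finite \<times> nat \<Rightarrow> 'b::finite pmf" and G :: "'k \<times> nat \<Rightarrow> 'b \<Rightarrow> 'a::finite \<Rightarrow> real"
  assumes G0: "\<And>i y a. 0 \<le> G i y a" and G1: "\<And>i y. (\<Sum>a\<in>UNIV. G i y a) = 1"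
  shows "measure_pmf.expectation (Pi_pmf (agents N) d q) (\<lambda>\<omega>. \<Sum>k\<in>UNIV. \<Sum>a\<in>UNIV.
      \<bar>\<Sum>j\<in>{1..N k}. (G (k,j) (\<omega> (k,j)) a - measure_pmf.expectation (q (k,j)) (\<lambda>y. G (k,j) y a))\<bar> / real (Npop N))
     \<le> sqrt (real CARD('a)) * ((1 / real (Npop N)) * (\<Sum>k\<in>UNIV. sqrt (real (N k))))"
proof -
  define Q where "Q = Pi_pmf (agents N) d q"
  have finQ: "finite (set_pmf Q)" unfolding Q_def by (rule Pi_finite_supp[OF finite_agents])
  have intQ[simp]: "integrable (measure_pmf Q) f" for f :: "_ \<Rightarrow> real"
    by (rule integrable_measure_pmf_finite[OF finQ])
  have intp[simp]: "integrable (measure_pmf (q i)) f" for i and f :: "'b \<Rightarrow> real"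
    by (rule integrable_measure_pmf_finite) simp
  have G1': "G i y a \<le> 1" for i y a
  proof -
    have "G i y a \<le> (\<Sum>a\<in>UNIV. G i y a)" by (rule member_le_sum) (auto intro: G0)
    then show ?thesis using G1 by simp
  qed
  have inner: "measure_pmf.expectation Q (\<lambda>\<omega>. \<bar>\<Sum>j\<in>{1..N k}. (G (k,j) (\<omega> (k,j)) a
       - measure_pmf.expectation (q (k,j)) (\<lambda>y. G (k,j) y a))\<bar>)
     \<le> sqrt (\<Sum>j\<in>{1..N k}. measure_pmf.expectation (q (k,j)) (\<lambda>y. G (k,j) y a))" for k a
  proof -
    have inj: "inj_on (Pair k) {1..N k}" by (auto simp: inj_on_def)
    have sub: "Pair k ` {1..N k} \<subseteq> agents N" by (auto simp: agents_def)
    have "measure_pmf.expectation Q (\<lambda>\<omega>. \<bar>\<Sum>i\<in>Pair k ` {1..N k}. (G i (\<omega> i) a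
       - measure_pmf.expectation (q i) (\<lambda>y. G i y a))\<bar>)
      \<le> sqrt (\<Sum>i\<in>Pair k ` {1..N k}. measure_pmf.expectation (q i) (\<lambda>y. G i y a))"
      unfolding Q_def by (rule core[OF finite_agents sub, where g="\<lambda>i y. G i y a"]) (auto intro: G0 G1')
    then show ?thesis by (simp only: sum.reindex[OF inj] o_def)
  qed
  have outer: "(\<Sum>a\<in>UNIV. sqrt (\<Sum>j\<in>{1..N k}. measure_pmf.expectation (q (k,j)) (\<lambda>y. G (k,j) y a)))
     \<le> sqrt (real CARD('a)) * sqrt (real (N k))" for k
  proof -
    have "(\<Sum>a\<in>UNIV. sqrt (\<Sum>j\<in>{1..N k}. measure_pmf.expectation (q (k,j)) (\<lambda>y. G (k,j) y a)))
       \<le> sqrt (real (card (UNIV::'a set)) * (\<Sum>a\<in>UNIV. \<Sum>j\<in>{1..N k}. measure_pmf.expectation (q (k,j)) (\<lambda>y. G (k,j) y a)))"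
      by (rule sum_sqrt_le) (auto intro!: sum_nonneg integral_nonneg_AE G0)
    also have "(\<Sum>a\<in>UNIV. \<Sum>j\<in>{1..N k}. measure_pmf.expectation (q (k,j)) (\<lambda>y. G (k,j) y a)) = real (N k)"
    proof -
      have "(\<Sum>a\<in>UNIV. \<Sum>j\<in>{1..N k}. measure_pmf.expectation (q (k,j)) (\<lambda>y. G (k,j) y a))
          = (\<Sum>j\<in>{1..N k}. \<Sum>a\<in>UNIV. measure_pmf.expectation (q (k,j)) (\<lambda>y. G (k,j) y a))"
        by (rule sum.swap)
      also have "\<dots> = (\<Sum>j\<in>{1..N k}. measure_pmf.expectation (q (k,j)) (\<lambda>y. \<Sum>a\<in>UNIV. G (k,j) y a))"
        by (simp add: Bochner_Integration.integral_sum)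
      also have "\<dots> = (\<Sum>j\<in>{1..N k}. 1)" by (simp add: G1)
      finally show ?thesis by simp
    qed
    finally show ?thesis by (simp add: real_sqrt_mult)
  qed
  have "measure_pmf.expectation Q (\<lambda>\<omega>. \<Sum>k\<in>UNIV. \<Sum>a\<in>UNIV.
      \<bar>\<Sum>j\<in>{1..N k}. (G (k,j) (\<omega> (k,j)) a - measure_pmf.expectation (q (k,j)) (\<lambda>y. G (k,j) y a))\<bar> / real (Npop N))
     = (\<Sum>k\<in>UNIV. \<Sum>a\<in>UNIV. measure_pmf.expectation Q (\<lambda>\<omega>.
      \<bar>\<Sum>j\<in>{1..N k}. (G (k,j) (\<omega> (k,j)) a - measure_pmf.expectation (q (k,j)) (\<lambda>y. G (k,j) y a))\<bar>) / real (Npop N))"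
    by (simp add: Bochner_Integration.integral_sum)
  also have "\<dots> \<le> (\<Sum>k\<in>UNIV. sqrt (real CARD('a)) * sqrt (real (N k)) / real (Npop N))"
  proof (rule sum_mono)
    fix k
    have "(\<Sum>a\<in>UNIV. measure_pmf.expectation Q (\<lambda>\<omega>.
      \<bar>\<Sum>j\<in>{1..N k}. (G (k,j) (\<omega> (k,j)) a - measure_pmf.expectation (q (k,j)) (\<lambda>y. G (k,j) y a))\<bar>) / real (Npop N))
      = (\<Sum>a\<in>UNIV. measure_pmf.expectation Q (\<lambda>\<omega>.
      \<bar>\<Sum>j\<in>{1..N k}. (G (k,j) (\<omega> (k,j)) a - measure_pmf.expectation (q (k,j)) (\<lambda>y. G (k,j) y a))\<bar>)) / real (Npop N)"
      by (simp add: sum_divide_distrib)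
    also have "\<dots> \<le> (\<Sum>a\<in>UNIV. sqrt (\<Sum>j\<in>{1..N k}. measure_pmf.expectation (q (k,j)) (\<lambda>y. G (k,j) y a))) / real (Npop N)"
      by (intro divide_right_mono sum_mono inner) simp
    also have "\<dots> \<le> sqrt (real CARD('a)) * sqrt (real (N k)) / real (Npop N)"
      by (intro divide_right_mono outer) simp
    finally show "(\<Sum>a\<in>UNIV. measure_pmf.expectation Q (\<lambda>\<omega>.
      \<bar>\<Sum>j\<in>{1..N k}. (G (k,j) (\<omega> (k,j)) a - measure_pmf.expectation (q (k,j)) (\<lambda>y. G (k,j) y a))\<bar>) / real (Npop N))
      \<le> sqrt (real CARD('a)) * sqrt (real (N k)) / real (Npop N)" .
  qed
  also have "\<dots> = sqrt (real CARD('a)) * ((1 / real (Npop N)) * (\<Sum>k\<in>UNIV. sqrt (real (N k))))"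
    by (simp add: sum_divide_distrib sum_distrib_left)
  finally show ?thesis unfolding Q_def .
qed

lemma l1_emp_eq:
  fixes c :: "'k::finite \<times> nat \<Rightarrow> 'a::finite"
  shows "l1 (emp N c) (\<lambda>(a,k). (\<Sum>j\<in>{1..N k}. t (k,j) a) / real (Npop N)) =
    (\<Sum>k\<in>UNIV. \<Sum>a\<in>UNIV. \<bar>\<Sum>j\<in>{1..N k}. ((if c (k,j) = a then 1 else 0) - t (k,j) a)\<bar> / real (Npop N))"
  unfolding l1_def emp_def sum_pair_UNIV by (simp add: sum_subtractf abs_divide flip: diff_divide_distrib)

lemma l1_emp_eq_pmf:
  fixes c :: "'k::finite \<times> nat \<Rightarrow> 'a::finite"
  shows "l1 (emp N c) (\<lambda>(a,k). (\<Sum>j\<in>{1..N k}. pmf (q (k,j)) a) / real (Npop N)) =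
    (\<Sum>k\<in>UNIV. \<Sum>a\<in>UNIV. \<bar>\<Sum>j\<in>{1..N k}. ((if c (k,j) = a then 1 else 0) - pmf (q (k,j)) a)\<bar> / real (Npop N))"
  by (rule l1_emp_eq)

lemma conc_emp:
  fixes q :: "'k::finite \<times> nat \<Rightarrow> 'a::finite pmf"
  shows "measure_pmf.expectation (Pi_pmf (agents N) d q)
     (\<lambda>\<omega>. l1 (emp N \<omega>) (\<lambda>(a,k). (\<Sum>j\<in>{1..N k}. pmf (q (k,j)) a) / real (Npop N)))
   \<le> sqrt (real CARD('a)) * ((1 / real (Npop N)) * (\<Sum>k\<in>UNIV. sqrt (real (N k))))"
proof -
  have e: "measure_pmf.expectation (q i) (\<lambda>y. if y = a then 1 else 0) = pmf (q i) a" for i a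
  proof -
    have h: "(\<lambda>y. pmf (q i) y * (if y = a then 1 else 0)) = (\<lambda>y. if y = a then pmf (q i) y else 0)" by auto
    show ?thesis unfolding exp_fin h by simp
  qed
  have "measure_pmf.expectation (Pi_pmf (agents N) d q)
     (\<lambda>\<omega>. l1 (emp N \<omega>) (\<lambda>(a,k). (\<Sum>j\<in>{1..N k}. pmf (q (k,j)) a) / real (Npop N)))
    = measure_pmf.expectation (Pi_pmf (agents N) d q) (\<lambda>\<omega>. \<Sum>k\<in>UNIV. \<Sum>a\<in>UNIV.
      \<bar>\<Sum>j\<in>{1..N k}. ((\<lambda>i y a. if y = a then 1 else 0) (k,j) (\<omega> (k,j)) a
        - measure_pmf.expectation (q (k,j)) (\<lambda>y. (\<lambda>i y a. if y = a then 1 else 0) (k,j) y a))\<bar> / real (Npop N))"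
    unfolding l1_emp_eq_pmf e ..
  also have "\<dots> \<le> sqrt (real CARD('a)) * ((1 / real (Npop N)) * (\<Sum>k\<in>UNIV. sqrt (real (N k))))"
    by (rule conc) auto
  finally show ?thesis .
qed



lemma sum_pair_UNIV':
  "(\<Sum>z\<in>(UNIV::('a::finite \<times> 'b::finite) set). h z) = (\<Sum>b\<in>UNIV. \<Sum>a\<in>UNIV. h (a,b))"
proof -
  have "(\<Sum>z\<in>(UNIV::('a \<times> 'b) set). h z) = (\<Sum>z\<in>UNIV \<times> UNIV. h z)" by simp
  also have "\<dots> = (\<Sum>a\<in>UNIV. \<Sum>b\<in>UNIV. h (a,b))" by (simp add: sum.cartesian_product)
  also have "\<dots> = (\<Sum>b\<in>UNIV. \<Sum>a\<in>UNIV. h (a,b))" by (rule sum.swap)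
  finally show ?thesis .
qed

lemma simplex_nonneg: "\<mu> \<in> dist_simplex \<Longrightarrow> 0 \<le> \<mu> z"
  by (simp add: dist_simplex_def)

lemma simplex_sum: "\<mu> \<in> dist_simplex \<Longrightarrow> (\<Sum>k\<in>UNIV. \<Sum>x\<in>UNIV. \<mu> (x,k)) = 1"
  by (simp add: dist_simplex_def sum_pair_UNIV'[symmetric])

lemma l1_pair: "l1 f g = (\<Sum>k\<in>UNIV. \<Sum>x\<in>UNIV. \<bar>f (x,k) - g (x,k)\<bar>)"
  unfolding l1_def by (rule sum_pair_UNIV')

lemma pmf_sum1: "(\<Sum>u\<in>UNIV. pmf (p::'u::finite pmf) u) = 1"
  by (rule sum_pmf_eq_1) auto

lemma l1_pmf_sum: "(\<Sum>u\<in>UNIV. \<bar>pmf p u - pmf q u\<bar>) = l1_pmf p q"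
  by (simp add: l1_pmf_def)

lemma lipG:
  fixes pt :: "'k::finite \<Rightarrow> 'x::finite \<Rightarrow> ('x,'k) dmeas \<Rightarrow> 'u::finite pmf"
    and F :: "'k \<Rightarrow> 'x \<Rightarrow> 'u \<Rightarrow> ('x,'k) dmeas \<Rightarrow> ('u,'k) dmeas \<Rightarrow> 'y::finite \<Rightarrow> real"
  assumes m1: "\<mu>1 \<in> dist_simplex" and m2: "\<mu>2 \<in> dist_simplex"
   and ptL: "\<And>k x. l1_pmf (pt k x \<mu>1) (pt k x \<mu>2) \<le> LQ * l1 \<mu>1 \<mu>2"
   and nuL: "L * l1 (nu_MF \<mu>1 pt) (nu_MF \<mu>2 pt) \<le> L * ((1 + LQ) * l1 \<mu>1 \<mu>2)"
   and FM: "\<And>k x u. (\<Sum>y\<in>UNIV. \<bar>F k x u \<mu>1 (nu_MF \<mu>1 pt) y\<bar>) \<le> M"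
   and FL: "\<And>k x u. (\<Sum>y\<in>UNIV. \<bar>F k x u \<mu>1 (nu_MF \<mu>1 pt) y - F k x u \<mu>2 (nu_MF \<mu>2 pt) y\<bar>)
              \<le> L * (l1 \<mu>1 \<mu>2 + l1 (nu_MF \<mu>1 pt) (nu_MF \<mu>2 pt))"
   and M0: "0 \<le> M" and L0: "0 \<le> L" and LQ0: "0 \<le> LQ"
  shows "(\<Sum>k\<in>UNIV. \<Sum>y\<in>UNIV. \<bar>\<Sum>x\<in>UNIV. \<Sum>u\<in>UNIV.
      \<mu>1 (x,k) * pmf (pt k x \<mu>1) u * F k x u \<mu>1 (nu_MF \<mu>1 pt) y
    - \<mu>2 (x,k) * pmf (pt k x \<mu>2) u * F k x u \<mu>2 (nu_MF \<mu>2 pt) y\<bar>)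
    \<le> (M * (1 + LQ) + L * (2 + LQ)) * l1 \<mu>1 \<mu>2"
proof -
  define \<nu>1 where "\<nu>1 = nu_MF \<mu>1 pt"
  define \<nu>2 where "\<nu>2 = nu_MF \<mu>2 pt"
  define D where "D = l1 \<mu>1 \<mu>2 + l1 \<nu>1 \<nu>2"
  define l where "l = l1 \<mu>1 \<mu>2"
  have l0: "0 \<le> l" unfolding l_def l1_def by (auto intro: sum_nonneg)
  have D0: "0 \<le> D" unfolding D_def l1_def by (auto intro!: add_nonneg_nonneg sum_nonneg)
  define T where "T k y x u = \<mu>1 (x,k) * pmf (pt k x \<mu>1) u * F k x u \<mu>1 \<nu>1 y
    - \<mu>2 (x,k) * pmf (pt k x \<mu>2) u * F k x u \<mu>2 \<nu>2 y" for k y x u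
  define W where "W k x u = \<bar>\<mu>1 (x,k) - \<mu>2 (x,k)\<bar> * pmf (pt k x \<mu>1) u * M
     + \<mu>2 (x,k) * \<bar>pmf (pt k x \<mu>1) u - pmf (pt k x \<mu>2) u\<bar> * M
     + \<mu>2 (x,k) * pmf (pt k x \<mu>2) u * (L * D)" for k x u
  have pw: "(\<Sum>y\<in>UNIV. \<bar>T k y x u\<bar>) \<le> W k x u" for k x u
  proof -
    define a where "a = \<mu>1 (x,k)"
    define b where "b = \<mu>2 (x,k)"
    define p where "p = pmf (pt k x \<mu>1) u"
    define q where "q = pmf (pt k x \<mu>2) u"
    have b0: "0 \<le> b" unfolding b_def by (rule simplex_nonneg[OF m2])
    have p0: "0 \<le> p" and q0: "0 \<le> q" by (simp_all add: p_def q_def)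
    have "\<bar>T k y x u\<bar> \<le> \<bar>a - b\<bar> * p * \<bar>F k x u \<mu>1 \<nu>1 y\<bar> + b * \<bar>p - q\<bar> * \<bar>F k x u \<mu>1 \<nu>1 y\<bar>
        + b * q * \<bar>F k x u \<mu>1 \<nu>1 y - F k x u \<mu>2 \<nu>2 y\<bar>" for y
    proof -
      define f where "f = F k x u \<mu>1 \<nu>1 y"
      define g where "g = F k x u \<mu>2 \<nu>2 y"
      have e: "T k y x u = (a - b) * p * f + b * (p - q) * f + b * q * (f - g)"
        unfolding T_def a_def b_def p_def q_def f_def g_def by (simp add: algebra_simps)
      have "\<bar>(a - b) * p * f + b * (p - q) * f + b * q * (f - g)\<bar>
          \<le> \<bar>(a - b) * p * f\<bar> + \<bar>b * (p - q) * f\<bar> + \<bar>b * q * (f - g)\<bar>"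
        by (rule order_trans[OF abs_triangle_ineq add_right_mono[OF abs_triangle_ineq]])
      also have "\<dots> = \<bar>a - b\<bar> * p * \<bar>f\<bar> + b * \<bar>p - q\<bar> * \<bar>f\<bar> + b * q * \<bar>f - g\<bar>"
        using b0 p0 q0 by (simp add: abs_mult)
      finally show ?thesis unfolding e f_def g_def .
    qed
    then have "(\<Sum>y\<in>UNIV. \<bar>T k y x u\<bar>) \<le> (\<Sum>y\<in>UNIV. \<bar>a - b\<bar> * p * \<bar>F k x u \<mu>1 \<nu>1 y\<bar> + b * \<bar>p - q\<bar> * \<bar>F k x u \<mu>1 \<nu>1 y\<bar>
        + b * q * \<bar>F k x u \<mu>1 \<nu>1 y - F k x u \<mu>2 \<nu>2 y\<bar>)"
      by (intro sum_mono)
    also have "\<dots> = \<bar>a - b\<bar> * p * (\<Sum>y\<in>UNIV. \<bar>F k x u \<mu>1 \<nu>1 y\<bar>) + b * \<bar>p - q\<bar> * (\<Sum>y\<in>UNIV. \<bar>F k x u \<mu>1 \<nu>1 y\<bar>)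
        + b * q * (\<Sum>y\<in>UNIV. \<bar>F k x u \<mu>1 \<nu>1 y - F k x u \<mu>2 \<nu>2 y\<bar>)"
      by (simp add: sum.distrib sum_distrib_left)
    also have "\<dots> \<le> \<bar>a - b\<bar> * p * M + b * \<bar>p - q\<bar> * M + b * q * (L * D)"
      using FM[of k x u] FL[of k x u] b0 p0 q0
      by (intro add_mono mult_left_mono) (auto simp: \<nu>1_def \<nu>2_def D_def)
    finally show ?thesis unfolding W_def a_def b_def p_def q_def .
  qed
  have sW: "(\<Sum>u\<in>UNIV. W k x u) \<le> \<bar>\<mu>1 (x,k) - \<mu>2 (x,k)\<bar> * M + \<mu>2 (x,k) * (LQ * l * M) + \<mu>2 (x,k) * (L * D)" for k x
  proof -
    have "(\<Sum>u\<in>UNIV. W k x u) = \<bar>\<mu>1 (x,k) - \<mu>2 (x,k)\<bar> * M * (\<Sum>u\<in>UNIV. pmf (pt k x \<mu>1) u)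
       + \<mu>2 (x,k) * M * (\<Sum>u\<in>UNIV. \<bar>pmf (pt k x \<mu>1) u - pmf (pt k x \<mu>2) u\<bar>)
       + \<mu>2 (x,k) * (L * D) * (\<Sum>u\<in>UNIV. pmf (pt k x \<mu>2) u)"
      unfolding W_def by (simp add: sum.distrib sum_distrib_left sum_distrib_right algebra_simps)
    also have "\<dots> = \<bar>\<mu>1 (x,k) - \<mu>2 (x,k)\<bar> * M + \<mu>2 (x,k) * M * l1_pmf (pt k x \<mu>1) (pt k x \<mu>2) + \<mu>2 (x,k) * (L * D)"
      by (simp add: pmf_sum1 l1_pmf_sum)
    also have "\<dots> \<le> \<bar>\<mu>1 (x,k) - \<mu>2 (x,k)\<bar> * M + \<mu>2 (x,k) * M * (LQ * l) + \<mu>2 (x,k) * (L * D)"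
      using ptL[of k x] simplex_nonneg[OF m2, of "(x,k)"] M0 L0 D0
      by (intro add_mono mult_left_mono) (auto simp: l_def)
    finally show ?thesis by (simp add: algebra_simps)
  qed
  have hl: "(\<Sum>k\<in>UNIV. \<Sum>x\<in>UNIV. \<bar>\<mu>1 (x,k) - \<mu>2 (x,k)\<bar>) = l"
    by (simp add: l_def l1_pair)
  have "(\<Sum>k\<in>UNIV. \<Sum>y\<in>UNIV. \<bar>\<Sum>x\<in>UNIV. \<Sum>u\<in>UNIV. T k y x u\<bar>) \<le> (\<Sum>k\<in>UNIV. \<Sum>y\<in>UNIV. \<Sum>x\<in>UNIV. \<Sum>u\<in>UNIV. \<bar>T k y x u\<bar>)"
    by (intro sum_mono order_trans[OF sum_abs] sum_abs)
  also have "\<dots> = (\<Sum>k\<in>UNIV. \<Sum>x\<in>UNIV. \<Sum>u\<in>UNIV. \<Sum>y\<in>UNIV. \<bar>T k y x u\<bar>)"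
  proof (rule sum.cong[OF refl])
    fix k
    have "(\<Sum>y\<in>UNIV. \<Sum>x\<in>UNIV. \<Sum>u\<in>UNIV. \<bar>T k y x u\<bar>) = (\<Sum>x\<in>UNIV. \<Sum>y\<in>UNIV. \<Sum>u\<in>UNIV. \<bar>T k y x u\<bar>)"
      by (rule sum.swap)
    also have "\<dots> = (\<Sum>x\<in>UNIV. \<Sum>u\<in>UNIV. \<Sum>y\<in>UNIV. \<bar>T k y x u\<bar>)"
      by (rule sum.cong[OF refl], rule sum.swap)
    finally show "(\<Sum>y\<in>UNIV. \<Sum>x\<in>UNIV. \<Sum>u\<in>UNIV. \<bar>T k y x u\<bar>) = (\<Sum>x\<in>UNIV. \<Sum>u\<in>UNIV. \<Sum>y\<in>UNIV. \<bar>T k y x u\<bar>)" .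
  qed
  also have "\<dots> \<le> (\<Sum>k\<in>UNIV. \<Sum>x\<in>UNIV. \<Sum>u\<in>UNIV. W k x u)"
    by (intro sum_mono pw)
  also have "\<dots> \<le> (\<Sum>k\<in>UNIV. \<Sum>x\<in>UNIV. \<bar>\<mu>1 (x,k) - \<mu>2 (x,k)\<bar> * M + \<mu>2 (x,k) * (LQ * l * M) + \<mu>2 (x,k) * (L * D))"
    by (intro sum_mono sW)
  also have "\<dots> = (\<Sum>k\<in>UNIV. \<Sum>x\<in>UNIV. \<bar>\<mu>1 (x,k) - \<mu>2 (x,k)\<bar>) * M + (LQ * l * M + L * D) * (\<Sum>k\<in>UNIV. \<Sum>x\<in>UNIV. \<mu>2 (x,k))"
    by (simp add: sum.distrib sum_distrib_left sum_distrib_right algebra_simps)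
  also have "\<dots> = l * M + LQ * l * M + L * D"
    by (simp add: simplex_sum[OF m2] hl)
  also have "\<dots> \<le> l * M + LQ * l * M + L * ((2 + LQ) * l)"
  proof -
    have "L * D = L * l + L * l1 \<nu>1 \<nu>2" by (simp add: D_def l_def distrib_left)
    also have "\<dots> \<le> L * l + L * ((1 + LQ) * l)" using nuL by (simp add: \<nu>1_def \<nu>2_def l_def)
    also have "\<dots> = L * ((2 + LQ) * l)" by (simp add: algebra_simps)
    finally show ?thesis by simp
  qed
  also have "\<dots> = (M * (1 + LQ) + L * (2 + LQ)) * l1 \<mu>1 \<mu>2"
    by (simp add: l_def algebra_simps)
  finally show ?thesis by (simp add: T_def \<nu>1_def \<nu>2_def)
qed

lemma delta_sum:
  fixes a b :: real and p q :: "'u::finite pmf"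
  shows "(\<Sum>u\<in>UNIV. a * pmf p u * (if u = y then 1 else 0) - b * pmf q u * (if u = y then 1 else 0))
       = a * pmf p y - b * pmf q y"
proof -
  have "(\<lambda>u. a * pmf p u * (if u = y then 1 else 0) - b * pmf q u * (if u = y then 1 else 0))
      = (\<lambda>u. if u = y then a * pmf p u - b * pmf q u else 0)" by auto
  then show ?thesis by (subst \<open>(\<lambda>u. _) = _\<close>) simp
qed

lemma nu_lip:
  fixes pt :: "'k::finite \<Rightarrow> 'x::finite \<Rightarrow> ('x,'k) dmeas \<Rightarrow> 'u::finite pmf"
  assumes m1: "\<mu>1 \<in> dist_simplex" and m2: "\<mu>2 \<in> dist_simplex"
   and ptL: "\<And>k x. l1_pmf (pt k x \<mu>1) (pt k x \<mu>2) \<le> LQ * l1 \<mu>1 \<mu>2" and LQ0: "0 \<le> LQ"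
  shows "l1 (nu_MF \<mu>1 pt) (nu_MF \<mu>2 pt) \<le> (1 + LQ) * l1 \<mu>1 \<mu>2"
proof -
  have "(\<Sum>k\<in>UNIV. \<Sum>y\<in>UNIV. \<bar>\<Sum>x\<in>UNIV. \<Sum>u\<in>UNIV.
      \<mu>1 (x,k) * pmf (pt k x \<mu>1) u * (\<lambda>k x u \<mu> \<nu> (y::'u). if u = y then 1 else (0::real)) k x u \<mu>1 (nu_MF \<mu>1 pt) y
    - \<mu>2 (x,k) * pmf (pt k x \<mu>2) u * (\<lambda>k x u \<mu> \<nu> (y::'u). if u = y then 1 else (0::real)) k x u \<mu>2 (nu_MF \<mu>2 pt) y\<bar>)
    \<le> (1 * (1 + LQ) + 0 * (2 + LQ)) * l1 \<mu>1 \<mu>2"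
    by (rule lipG[OF m1 m2 ptL]) (auto simp: LQ0)
  moreover have "(\<Sum>k\<in>UNIV. \<Sum>y\<in>UNIV. \<bar>\<Sum>x\<in>UNIV. \<Sum>u\<in>UNIV.
      \<mu>1 (x,k) * pmf (pt k x \<mu>1) u * (\<lambda>k x u \<mu> \<nu> (y::'u). if u = y then 1 else (0::real)) k x u \<mu>1 (nu_MF \<mu>1 pt) y
    - \<mu>2 (x,k) * pmf (pt k x \<mu>2) u * (\<lambda>k x u \<mu> \<nu> (y::'u). if u = y then 1 else (0::real)) k x u \<mu>2 (nu_MF \<mu>2 pt) y\<bar>)
    = l1 (nu_MF \<mu>1 pt) (nu_MF \<mu>2 pt)"
  proof -
    have inner: "(\<Sum>x\<in>UNIV. \<Sum>u\<in>UNIV. \<mu>1 (x,k) * pmf (pt k x \<mu>1) u * (if u = y then 1 else 0)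
       - \<mu>2 (x,k) * pmf (pt k x \<mu>2) u * (if u = y then 1 else 0)) = nu_MF \<mu>1 pt (y,k) - nu_MF \<mu>2 pt (y,k)" for k y
      unfolding nu_MF_def by (simp only: delta_sum) (simp add: sum_subtractf mult.commute)
    show ?thesis unfolding l1_pair by (simp only: inner)
  qed
  ultimately show ?thesis by simp
qed

lemma nu_simplex:
  fixes pt :: "'k::finite \<Rightarrow> 'x::finite \<Rightarrow> ('x,'k) dmeas \<Rightarrow> 'u::finite pmf"
  assumes m: "\<mu> \<in> dist_simplex"
  shows "nu_MF \<mu> pt \<in> dist_simplex"
proof -
  have nn: "0 \<le> nu_MF \<mu> pt z" for z
    using simplex_nonneg[OF m] by (cases z) (auto simp: nu_MF_def intro!: sum_nonneg)
  have "(\<Sum>z\<in>UNIV. nu_MF \<mu> pt z) = (\<Sum>k\<in>UNIV. \<Sum>u\<in>UNIV. \<Sum>x\<in>UNIV. pmf (pt k x \<mu>) u * \<mu> (x, k))"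
    by (simp add: sum_pair_UNIV' nu_MF_def)
  also have "\<dots> = (\<Sum>k\<in>UNIV. \<Sum>x\<in>UNIV. \<mu> (x, k) * (\<Sum>u\<in>UNIV. pmf (pt k x \<mu>) u))"
    by (simp add: sum_distrib_left sum_distrib_right mult.commute sum.swap[of _ "UNIV::'u set"])
  also have "\<dots> = 1" by (simp add: pmf_sum1 simplex_sum[OF m])
  finally show ?thesis using nn by (simp add: dist_simplex_def)
qed

lemma P_simplex:
  fixes pt :: "'k::finite \<Rightarrow> 'x::finite \<Rightarrow> ('x,'k) dmeas \<Rightarrow> 'u::finite pmf"
  assumes m: "\<mu> \<in> dist_simplex"
  shows "P_MF P \<mu> pt \<in> dist_simplex"
proof -
  have nn: "0 \<le> P_MF P \<mu> pt z" for z
    using simplex_nonneg[OF m] by (cases z) (auto simp: P_MF_def intro!: sum_nonneg)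
  have "(\<Sum>z\<in>UNIV. P_MF P \<mu> pt z) = (\<Sum>k\<in>UNIV. \<Sum>y\<in>UNIV. \<Sum>x\<in>UNIV. \<Sum>u\<in>UNIV.
      \<mu> (x, k) * pmf (pt k x \<mu>) u * pmf (P k x u \<mu> (nu_MF \<mu> pt)) y)"
    by (simp add: sum_pair_UNIV' P_MF_def)
  also have "\<dots> = (\<Sum>k\<in>UNIV. \<Sum>x\<in>UNIV. \<Sum>u\<in>UNIV. \<Sum>y\<in>UNIV.
      \<mu> (x, k) * pmf (pt k x \<mu>) u * pmf (P k x u \<mu> (nu_MF \<mu> pt)) y)"
  proof (rule sum.cong[OF refl])
    fix k
    show "(\<Sum>y\<in>UNIV. \<Sum>x\<in>UNIV. \<Sum>u\<in>UNIV. \<mu> (x, k) * pmf (pt k x \<mu>) u * pmf (P k x u \<mu> (nu_MF \<mu> pt)) y) =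
        (\<Sum>x\<in>UNIV. \<Sum>u\<in>UNIV. \<Sum>y\<in>UNIV. \<mu> (x, k) * pmf (pt k x \<mu>) u * pmf (P k x u \<mu> (nu_MF \<mu> pt)) y)"
      by (subst sum.swap) (rule sum.cong[OF refl], rule sum.swap)
  qed
  also have "\<dots> = (\<Sum>k\<in>UNIV. \<Sum>x\<in>UNIV. \<mu> (x, k) * (\<Sum>u\<in>UNIV. pmf (pt k x \<mu>) u))"
    by (simp add: sum_distrib_left[symmetric] pmf_sum1)
  also have "\<dots> = 1" by (simp add: pmf_sum1 simplex_sum[OF m])
  finally show ?thesis using nn by (simp add: dist_simplex_def)
qed

lemma rMF_lip:
  fixes pt :: "'k::finite \<Rightarrow> 'x::finite \<Rightarrow> ('x,'k) dmeas \<Rightarrow> 'u::finite pmf"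
    and r :: "('x,'u,'k) rew"
  assumes m1: "\<mu>1 \<in> dist_simplex" and m2: "\<mu>2 \<in> dist_simplex"
   and ptL: "\<And>k x. l1_pmf (pt k x \<mu>1) (pt k x \<mu>2) \<le> LQ * l1 \<mu>1 \<mu>2" and LQ0: "0 \<le> LQ"
   and r_bound: "\<forall>k x u \<mu> \<nu>. \<mu> \<in> dist_simplex \<longrightarrow> \<nu> \<in> dist_simplex \<longrightarrow> \<bar>r k x u \<mu> \<nu>\<bar> \<le> MR"
   and r_lip: "\<forall>k x u \<mu>1 \<mu>2 \<nu>1 \<nu>2. \<mu>1 \<in> dist_simplex \<longrightarrow> \<mu>2 \<in> dist_simplex \<longrightarrow> \<nu>1 \<in> dist_simplex \<longrightarrow> \<nu>2 \<in> dist_simplex \<longrightarrow>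
        \<bar>r k x u \<mu>1 \<nu>1 - r k x u \<mu>2 \<nu>2\<bar> \<le> LR * (l1 \<mu>1 \<mu>2 + l1 \<nu>1 \<nu>2)"
   and MR0: "0 \<le> MR" and LR0: "0 \<le> LR"
  shows "\<bar>(\<Sum>k\<in>UNIV. r_MF r k \<mu>1 pt) - (\<Sum>k\<in>UNIV. r_MF r k \<mu>2 pt)\<bar> \<le> (MR * (1 + LQ) + LR * (2 + LQ)) * l1 \<mu>1 \<mu>2"
proof -
  have n1: "nu_MF \<mu>1 pt \<in> dist_simplex" and n2: "nu_MF \<mu>2 pt \<in> dist_simplex"
    using nu_simplex m1 m2 by auto
  have "(\<Sum>k\<in>UNIV. \<Sum>y\<in>UNIV. \<bar>\<Sum>x\<in>UNIV. \<Sum>u\<in>UNIV.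
      \<mu>1 (x,k) * pmf (pt k x \<mu>1) u * (\<lambda>k x u \<mu> \<nu> (y::unit). r k x u \<mu> \<nu>) k x u \<mu>1 (nu_MF \<mu>1 pt) y
    - \<mu>2 (x,k) * pmf (pt k x \<mu>2) u * (\<lambda>k x u \<mu> \<nu> (y::unit). r k x u \<mu> \<nu>) k x u \<mu>2 (nu_MF \<mu>2 pt) y\<bar>)
    \<le> (MR * (1 + LQ) + LR * (2 + LQ)) * l1 \<mu>1 \<mu>2"
  proof (rule lipG[OF m1 m2 ptL])
    show "LR * l1 (nu_MF \<mu>1 pt) (nu_MF \<mu>2 pt) \<le> LR * ((1 + LQ) * l1 \<mu>1 \<mu>2)"
      by (rule mult_left_mono[OF nu_lip[OF m1 m2 ptL LQ0] LR0])
  qed (use r_bound r_lip n1 n2 m1 m2 MR0 LR0 LQ0 in auto)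
  moreover have "\<bar>(\<Sum>k\<in>UNIV. r_MF r k \<mu>1 pt) - (\<Sum>k\<in>UNIV. r_MF r k \<mu>2 pt)\<bar> \<le>
     (\<Sum>k\<in>UNIV. \<Sum>y\<in>UNIV. \<bar>\<Sum>x\<in>UNIV. \<Sum>u\<in>UNIV.
      \<mu>1 (x,k) * pmf (pt k x \<mu>1) u * (\<lambda>k x u \<mu> \<nu> (y::unit). r k x u \<mu> \<nu>) k x u \<mu>1 (nu_MF \<mu>1 pt) y
    - \<mu>2 (x,k) * pmf (pt k x \<mu>2) u * (\<lambda>k x u \<mu> \<nu> (y::unit). r k x u \<mu> \<nu>) k x u \<mu>2 (nu_MF \<mu>2 pt) y\<bar>)"
    unfolding r_MF_def by (simp add: sum_subtractf[symmetric] sum_abs UNIV_unit)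
  ultimately show ?thesis by linarith
qed

lemma PMF_lip:
  fixes pt :: "'k::finite \<Rightarrow> 'x::finite \<Rightarrow> ('x,'k) dmeas \<Rightarrow> 'u::finite pmf"
    and P :: "('x,'u,'k) trans"
  assumes m1: "\<mu>1 \<in> dist_simplex" and m2: "\<mu>2 \<in> dist_simplex"
   and ptL: "\<And>k x. l1_pmf (pt k x \<mu>1) (pt k x \<mu>2) \<le> LQ * l1 \<mu>1 \<mu>2" and LQ0: "0 \<le> LQ"
   and P_lip: "\<forall>k x u \<mu>1 \<mu>2 \<nu>1 \<nu>2. \<mu>1 \<in> dist_simplex \<longrightarrow> \<mu>2 \<in> dist_simplex \<longrightarrow> \<nu>1 \<in> dist_simplex \<longrightarrow> \<nu>2 \<in> dist_simplex \<longrightarrow>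
        l1_pmf (P k x u \<mu>1 \<nu>1) (P k x u \<mu>2 \<nu>2) \<le> LP * (l1 \<mu>1 \<mu>2 + l1 \<nu>1 \<nu>2)"
   and LP0: "0 \<le> LP"
  shows "l1 (P_MF P \<mu>1 pt) (P_MF P \<mu>2 pt) \<le> ((1 + LQ) + LP * (2 + LQ)) * l1 \<mu>1 \<mu>2"
proof -
  have n1: "nu_MF \<mu>1 pt \<in> dist_simplex" and n2: "nu_MF \<mu>2 pt \<in> dist_simplex"
    using nu_simplex m1 m2 by auto
  have "(\<Sum>k\<in>UNIV. \<Sum>y\<in>UNIV. \<bar>\<Sum>x\<in>UNIV. \<Sum>u\<in>UNIV.
      \<mu>1 (x,k) * pmf (pt k x \<mu>1) u * (\<lambda>k x u \<mu> \<nu> y. pmf (P k x u \<mu> \<nu>) y) k x u \<mu>1 (nu_MF \<mu>1 pt) y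
    - \<mu>2 (x,k) * pmf (pt k x \<mu>2) u * (\<lambda>k x u \<mu> \<nu> y. pmf (P k x u \<mu> \<nu>) y) k x u \<mu>2 (nu_MF \<mu>2 pt) y\<bar>)
    \<le> (1 * (1 + LQ) + LP * (2 + LQ)) * l1 \<mu>1 \<mu>2"
  proof (rule lipG[OF m1 m2 ptL])
    show "LP * l1 (nu_MF \<mu>1 pt) (nu_MF \<mu>2 pt) \<le> LP * ((1 + LQ) * l1 \<mu>1 \<mu>2)"
      by (rule mult_left_mono[OF nu_lip[OF m1 m2 ptL LQ0] LP0])
  qed (use P_lip n1 n2 m1 m2 LP0 LQ0 in \<open>auto simp: pmf_sum1 l1_pmf_def\<close>)
  moreover have "(\<Sum>k\<in>UNIV. \<Sum>y\<in>UNIV. \<bar>\<Sum>x\<in>UNIV. \<Sum>u\<in>UNIV.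
      \<mu>1 (x,k) * pmf (pt k x \<mu>1) u * (\<lambda>k x u \<mu> \<nu> y. pmf (P k x u \<mu> \<nu>) y) k x u \<mu>1 (nu_MF \<mu>1 pt) y
    - \<mu>2 (x,k) * pmf (pt k x \<mu>2) u * (\<lambda>k x u \<mu> \<nu> y. pmf (P k x u \<mu> \<nu>) y) k x u \<mu>2 (nu_MF \<mu>2 pt) y\<bar>)
    = l1 (P_MF P \<mu>1 pt) (P_MF P \<mu>2 pt)"
    unfolding l1_pair P_MF_def by (simp add: sum_subtractf)
  ultimately show ?thesis by simp
qed

lemma Npop_pos: assumes "\<forall>k. 1 \<le> N k" shows "0 < Npop (N::'k::finite \<Rightarrow> nat)"
proof -
  obtain k0 :: 'k where True by blast
  have "N k0 \<le> Npop N" unfolding Npop_def by (rule member_le_sum) auto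
  then show ?thesis using assms by (metis le_trans not_le zero_less_one)
qed

lemma emp_simplex:
  fixes c :: "'k::finite \<times> nat \<Rightarrow> 'a::finite"
  assumes "0 < Npop N"
  shows "emp N c \<in> dist_simplex"
proof -
  have cnt: "(\<Sum>a\<in>UNIV. \<Sum>j\<in>{1..N k}. if c (k,j) = a then 1 else (0::real)) = real (N k)" for k
    by (subst sum.swap) simp
  have "(\<Sum>z\<in>UNIV. emp N c z) = (\<Sum>k\<in>UNIV. \<Sum>a\<in>UNIV. (\<Sum>j\<in>{1..N k}. if c (k, j) = a then 1 else 0) / real (Npop N))"
    by (simp add: sum_pair_UNIV' emp_def)
  also have "\<dots> = (\<Sum>k\<in>UNIV. real (N k) / real (Npop N))"
    unfolding sum_divide_distrib[symmetric] cnt ..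
  also have "\<dots> = 1"
  proof -
    have h: "(\<Sum>k\<in>UNIV. real (N k)) = real (Npop N)" by (simp add: Npop_def)
    show ?thesis using assms by (simp add: sum_divide_distrib[symmetric] h)
  qed
  finally show ?thesis by (auto simp: dist_simplex_def emp_def intro!: divide_nonneg_nonneg sum_nonneg)
qed



lemma l1_tri: "l1 f h \<le> l1 f g + l1 g h"
  unfolding l1_def sum.distrib[symmetric] by (intro sum_mono) arith

lemma l1_self: "l1 f f = 0" by (simp add: l1_def)

lemma l1_nonneg: "0 \<le> l1 f g" by (simp add: l1_def sum_nonneg)

lemma fiber:
  fixes F :: "'a::finite \<Rightarrow> real"
  shows "(\<Sum>x\<in>UNIV. F x * ((\<Sum>j\<in>S. if c j = x then 1 else 0) / n)) = (\<Sum>j\<in>S. F (c j)) / (n::real)"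
proof -
  have e1: "F x * (\<Sum>j\<in>S. if c j = x then 1 else 0) = (\<Sum>j\<in>S. if c j = x then F x else 0)" for x
    unfolding sum_distrib_left by (rule sum.cong) auto
  have "(\<Sum>x\<in>UNIV. F x * ((\<Sum>j\<in>S. if c j = x then 1 else 0) / n)) =
      (\<Sum>x\<in>UNIV. F x * (\<Sum>j\<in>S. if c j = x then 1 else 0)) / n"
    by (simp only: times_divide_eq_right) (rule sum_divide_distrib[symmetric])
  also have "\<dots> = (\<Sum>x\<in>UNIV. \<Sum>j\<in>S. (if c j = x then F x else 0)) / n"
    by (simp only: e1)
  also have "\<dots> = (\<Sum>j\<in>S. \<Sum>x\<in>UNIV. (if c j = x then F x else 0)) / n"
    by (subst sum.swap) (rule refl)
  also have "\<dots> = (\<Sum>j\<in>S. F (c j)) / n" by simp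
  finally show ?thesis .
qed

lemma nu_emp:
  fixes xs :: "'k::finite \<times> nat \<Rightarrow> 'x::finite" and pt :: "'k \<Rightarrow> 'x \<Rightarrow> ('x,'k) dmeas \<Rightarrow> 'u::finite pmf"
  shows "nu_MF (emp N xs) pt = (\<lambda>(u,k). (\<Sum>j\<in>{1..N k}. pmf (pt k (xs (k,j)) (emp N xs)) u) / real (Npop N))"
proof (rule ext, clarify)
  fix u k
  show "nu_MF (emp N xs) pt (u, k) = (\<Sum>j\<in>{1..N k}. pmf (pt k (xs (k,j)) (emp N xs)) u) / real (Npop N)"
    unfolding nu_MF_def by (simp only: prod.case) (subst (2) emp_def, simp only: prod.case fiber)
qed

lemma PMF_emp:
  fixes xs :: "'k::finite \<times> nat \<Rightarrow> 'x::finite" and pt :: "'k \<Rightarrow> 'x \<Rightarrow> ('x,'k) dmeas \<Rightarrow> 'u::finite pmf"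
  shows "P_MF P (emp N xs) pt = (\<lambda>(y,k). (\<Sum>j\<in>{1..N k}. \<Sum>u\<in>UNIV. pmf (pt k (xs (k,j)) (emp N xs)) u *
     pmf (P k (xs (k,j)) u (emp N xs) (nu_MF (emp N xs) pt)) y) / real (Npop N))"
proof (rule ext, clarify)
  fix y k
  have "P_MF P (emp N xs) pt (y, k) = (\<Sum>x\<in>UNIV. emp N xs (x, k) * (\<Sum>u\<in>UNIV. pmf (pt k x (emp N xs)) u *
     pmf (P k x u (emp N xs) (nu_MF (emp N xs) pt)) y))"
    unfolding P_MF_def by (simp add: sum_distrib_left mult.assoc)
  also have "\<dots> = (\<Sum>x\<in>UNIV. (\<Sum>u\<in>UNIV. pmf (pt k x (emp N xs)) u *
     pmf (P k x u (emp N xs) (nu_MF (emp N xs) pt)) y) * emp N xs (x, k))"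
    by (rule sum.cong[OF refl], rule mult.commute)
  also have "\<dots> = (\<Sum>j\<in>{1..N k}. \<Sum>u\<in>UNIV. pmf (pt k (xs (k,j)) (emp N xs)) u *
     pmf (P k (xs (k,j)) u (emp N xs) (nu_MF (emp N xs) pt)) y) / real (Npop N)"
    by (subst (2) emp_def, simp only: prod.case fiber)
  finally show "P_MF P (emp N xs) pt (y, k) = (\<Sum>j\<in>{1..N k}. \<Sum>u\<in>UNIV. pmf (pt k (xs (k,j)) (emp N xs)) u *
     pmf (P k (xs (k,j)) u (emp N xs) (nu_MF (emp N xs) pt)) y) / real (Npop N)" .
qed

lemma rMF_emp:
  fixes xs :: "'k::finite \<times> nat \<Rightarrow> 'x::finite" and pt :: "'k \<Rightarrow> 'x \<Rightarrow> ('x,'k) dmeas \<Rightarrow> 'u::finite pmf"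
  shows "r_MF r k (emp N xs) pt = (\<Sum>j\<in>{1..N k}. \<Sum>u\<in>UNIV. pmf (pt k (xs (k,j)) (emp N xs)) u *
     r k (xs (k,j)) u (emp N xs) (nu_MF (emp N xs) pt)) / real (Npop N)"
proof -
  have "r_MF r k (emp N xs) pt = (\<Sum>x\<in>UNIV. emp N xs (x, k) * (\<Sum>u\<in>UNIV. pmf (pt k x (emp N xs)) u *
     r k x u (emp N xs) (nu_MF (emp N xs) pt)))"
    unfolding r_MF_def by (simp add: sum_distrib_left mult.assoc)
  also have "\<dots> = (\<Sum>x\<in>UNIV. (\<Sum>u\<in>UNIV. pmf (pt k x (emp N xs)) u *
     r k x u (emp N xs) (nu_MF (emp N xs) pt)) * emp N xs (x, k))"
    by (rule sum.cong[OF refl], rule mult.commute)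
  also have "\<dots> = (\<Sum>j\<in>{1..N k}. \<Sum>u\<in>UNIV. pmf (pt k (xs (k,j)) (emp N xs)) u *
     r k (xs (k,j)) u (emp N xs) (nu_MF (emp N xs) pt)) / real (Npop N)"
    by (subst (2) emp_def, simp only: prod.case fiber)
  finally show ?thesis .
qed

lemma act_eq:
  "act_pmf N \<pi> t xs = Pi_pmf (agents N) undefined (\<lambda>(k,j). \<pi> t k (xs (k,j)) (emp N xs))"
  by (simp add: act_pmf_def)

lemma act_fin: "finite (set_pmf (act_pmf (N::'k::finite \<Rightarrow> nat) (\<pi>::('x,'u::finite,'k) policy) t xs))"
  unfolding act_pmf_def by (rule Pi_finite_supp[OF finite_agents])

lemma next_fin: "finite (set_pmf (next_pmf (N::'k::finite \<Rightarrow> nat) (P::('x::finite,'u,'k) trans) xs us))"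
  unfolding next_pmf_def by (rule Pi_finite_supp[OF finite_agents])

lemma act_conc:
  fixes N :: "'k::finite \<Rightarrow> nat" and xs :: "'k \<times> nat \<Rightarrow> 'x::finite" and \<pi> :: "('x,'u::finite,'k) policy"
  shows "measure_pmf.expectation (act_pmf N \<pi> t xs) (\<lambda>us. l1 (emp N us) (nu_MF (emp N xs) (\<pi> t)))
     \<le> sqrt (real CARD('u)) * ((1 / real (Npop N)) * (\<Sum>k\<in>UNIV. sqrt (real (N k))))"
proof -
  define qq where "qq = (\<lambda>(k,j). \<pi> t k (xs (k,j)) (emp N xs))"
  have "nu_MF (emp N xs) (\<pi> t) = (\<lambda>(u,k). (\<Sum>j\<in>{1..N k}. pmf (qq (k,j)) u) / real (Npop N))"
    unfolding qq_def by (simp add: nu_emp)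
  moreover have "act_pmf N \<pi> t xs = Pi_pmf (agents N) undefined qq"
    unfolding qq_def by (rule act_eq)
  ultimately show ?thesis using conc_emp[of N undefined qq] by simp
qed

lemma cond_reward:
  fixes N :: "'k::finite \<Rightarrow> nat" and xs :: "'k \<times> nat \<Rightarrow> 'x::finite" and \<pi> :: "('x,'u::finite,'k) policy"
    and r :: "('x,'u,'k) rew"
  assumes Npos: "0 < Npop N"
    and r_lip: "\<forall>k x u \<mu>1 \<mu>2 \<nu>1 \<nu>2. \<mu>1 \<in> dist_simplex \<longrightarrow> \<mu>2 \<in> dist_simplex \<longrightarrow> \<nu>1 \<in> dist_simplex \<longrightarrow> \<nu>2 \<in> dist_simplex \<longrightarrow>
        \<bar>r k x u \<mu>1 \<nu>1 - r k x u \<mu>2 \<nu>2\<bar> \<le> LR * (l1 \<mu>1 \<mu>2 + l1 \<nu>1 \<nu>2)"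
    and LR0: "0 \<le> LR"
  shows "\<bar>(1 / real (Npop N)) * (\<Sum>k\<in>UNIV. \<Sum>j\<in>{1..N k}. measure_pmf.expectation (act_pmf N \<pi> t xs)
            (\<lambda>us. r k (xs (k,j)) (us (k,j)) (emp N xs) (emp N us)))
         - (\<Sum>k\<in>UNIV. r_MF r k (emp N xs) (\<pi> t))\<bar>
     \<le> LR * (sqrt (real CARD('u)) * ((1 / real (Npop N)) * (\<Sum>k\<in>UNIV. sqrt (real (N k)))))"
proof -
  define \<mu> where "\<mu> = emp N xs"
  define \<nu> where "\<nu> = nu_MF \<mu> (\<pi> t)"
  define qq where "qq = (\<lambda>(k,j). \<pi> t k (xs (k,j)) \<mu>)"
  define Q where "Q = act_pmf N \<pi> t xs"
  define A where "A = sqrt (real CARD('u)) * ((1 / real (Npop N)) * (\<Sum>k\<in>UNIV. sqrt (real (N k))))"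
  have Qe: "Q = Pi_pmf (agents N) undefined qq" by (simp add: Q_def act_eq qq_def \<mu>_def)
  have intQ[simp]: "integrable (measure_pmf Q) f" for f :: "_ \<Rightarrow> real"
    unfolding Q_def by (rule integrable_measure_pmf_finite[OF act_fin])
  have ms: "\<mu> \<in> dist_simplex" unfolding \<mu>_def by (rule emp_simplex[OF Npos])
  have ns: "\<nu> \<in> dist_simplex" unfolding \<nu>_def by (rule nu_simplex[OF ms])
  have es: "emp N us \<in> dist_simplex" for us :: "'k \<times> nat \<Rightarrow> 'u" by (rule emp_simplex[OF Npos])
  define f where "f = (\<lambda>k j us. r k (xs (k,j)) (us (k,j)) \<mu> (emp N us))"
  define g where "g = (\<lambda>k j (us::'k \<times> nat \<Rightarrow> 'u). r k (xs (k,j)) (us (k,j)) \<mu> \<nu>)"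
  have pw: "\<bar>f k j us - g k j us\<bar> \<le> LR * l1 (emp N us) \<nu>" for k j us
    using r_lip[rule_format, of \<mu> \<mu> "emp N us" \<nu> k "xs (k,j)" "us (k,j)"] ms ns es[of us]
    by (simp add: f_def g_def l1_self)
  have Eg: "measure_pmf.expectation Q (g k j) = (\<Sum>u\<in>UNIV. pmf (\<pi> t k (xs (k,j)) \<mu>) u * r k (xs (k,j)) u \<mu> \<nu>)"
    if "j \<in> {1..N k}" for k j
  proof -
    have kj: "(k,j) \<in> agents N" using that by (simp add: agents_def)
    have "measure_pmf.expectation Q (g k j) = measure_pmf.expectation (qq (k,j)) (\<lambda>u. r k (xs (k,j)) u \<mu> \<nu>)"
      unfolding Qe g_def by (rule Pi_marg[OF finite_agents kj])
    then show ?thesis by (simp add: qq_def exp_fin)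
  qed
  have sumg: "(1 / real (Npop N)) * (\<Sum>k\<in>UNIV. \<Sum>j\<in>{1..N k}. measure_pmf.expectation Q (g k j))
      = (\<Sum>k\<in>UNIV. r_MF r k \<mu> (\<pi> t))"
  proof -
    have "(\<Sum>k\<in>UNIV. \<Sum>j\<in>{1..N k}. measure_pmf.expectation Q (g k j)) =
       (\<Sum>k\<in>UNIV. \<Sum>j\<in>{1..N k}. \<Sum>u\<in>UNIV. pmf (\<pi> t k (xs (k,j)) \<mu>) u * r k (xs (k,j)) u \<mu> \<nu>)"
      by (intro sum.cong refl Eg) 
    then show ?thesis
      by (simp add: rMF_emp \<mu>_def \<nu>_def sum_divide_distrib sum_distrib_left)
  qed
  have El1: "measure_pmf.expectation Q (\<lambda>us. l1 (emp N us) \<nu>) \<le> A"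
    unfolding Q_def \<nu>_def \<mu>_def A_def by (rule act_conc)
  have "(1 / real (Npop N)) * (\<Sum>k\<in>UNIV. \<Sum>j\<in>{1..N k}. measure_pmf.expectation Q (f k j))
         - (\<Sum>k\<in>UNIV. r_MF r k \<mu> (\<pi> t))
      = (1 / real (Npop N)) * (\<Sum>k\<in>UNIV. \<Sum>j\<in>{1..N k}. measure_pmf.expectation Q (\<lambda>us. f k j us - g k j us))"
    unfolding sumg[symmetric] by (simp add: Bochner_Integration.integral_diff sum_subtractf right_diff_distrib)
  also have "\<bar>\<dots>\<bar> \<le> (1 / real (Npop N)) * (\<Sum>k\<in>UNIV. \<Sum>j\<in>{1..N k}. LR * measure_pmf.expectation Q (\<lambda>us. l1 (emp N us) \<nu>))"
  proof -
    have "\<bar>(\<Sum>k\<in>UNIV. \<Sum>j\<in>{1..N k}. measure_pmf.expectation Q (\<lambda>us. f k j us - g k j us))\<bar>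
       \<le> (\<Sum>k\<in>UNIV. \<Sum>j\<in>{1..N k}. \<bar>measure_pmf.expectation Q (\<lambda>us. f k j us - g k j us)\<bar>)"
      by (intro order_trans[OF sum_abs] sum_mono sum_abs)
    also have "\<dots> \<le> (\<Sum>k\<in>UNIV. \<Sum>j\<in>{1..N k}. LR * measure_pmf.expectation Q (\<lambda>us. l1 (emp N us) \<nu>))"
    proof (intro sum_mono)
      fix k j
      have "\<bar>measure_pmf.expectation Q (\<lambda>us. f k j us - g k j us)\<bar> \<le> measure_pmf.expectation Q (\<lambda>us. \<bar>f k j us - g k j us\<bar>)"
        by (rule integral_abs_bound)
      also have "\<dots> \<le> measure_pmf.expectation Q (\<lambda>us. LR * l1 (emp N us) \<nu>)"
        by (rule integral_mono) (auto intro: pw)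
      finally show "\<bar>measure_pmf.expectation Q (\<lambda>us. f k j us - g k j us)\<bar> \<le> LR * measure_pmf.expectation Q (\<lambda>us. l1 (emp N us) \<nu>)"
        by simp
    qed
    finally show ?thesis using Npos by (simp add: abs_mult divide_right_mono)
  qed
  also have "\<dots> = LR * measure_pmf.expectation Q (\<lambda>us. l1 (emp N us) \<nu>)"
  proof -
    have h: "(\<Sum>k\<in>UNIV. real (N k)) = real (Npop N)" by (simp add: Npop_def)
    show ?thesis using Npos by (simp add: sum_distrib_right[symmetric] h)
  qed
  also have "\<dots> \<le> LR * A" by (rule mult_left_mono[OF El1 LR0])
  finally show ?thesis by (simp add: Q_def f_def \<mu>_def A_def)
qed

lemma l1_avg_eq:
  fixes a b :: "'k::finite \<times> nat \<Rightarrow> 'y::finite \<Rightarrow> real"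
  shows "l1 (\<lambda>(y,k). (\<Sum>j\<in>{1..N k}. a (k,j) y) / real (Npop N)) (\<lambda>(y,k). (\<Sum>j\<in>{1..N k}. b (k,j) y) / real (Npop N))
    = (\<Sum>k\<in>UNIV. \<Sum>y\<in>UNIV. \<bar>\<Sum>j\<in>{1..N k}. (a (k,j) y - b (k,j) y)\<bar> / real (Npop N))"
  unfolding l1_pair by (simp add: sum_subtractf abs_divide flip: diff_divide_distrib)

lemma cond_trans:
  fixes N :: "'k::finite \<Rightarrow> nat" and xs :: "'k \<times> nat \<Rightarrow> 'x::finite" and \<pi> :: "('x,'u::finite,'k) policy"
    and P :: "('x,'u,'k) trans"
  assumes Npos: "0 < Npop N"
    and P_lip: "\<forall>k x u \<mu>1 \<mu>2 \<nu>1 \<nu>2. \<mu>1 \<in> dist_simplex \<longrightarrow> \<mu>2 \<in> dist_simplex \<longrightarrow> \<nu>1 \<in> dist_simplex \<longrightarrow> \<nu>2 \<in> dist_simplex \<longrightarrow>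
        l1_pmf (P k x u \<mu>1 \<nu>1) (P k x u \<mu>2 \<nu>2) \<le> LP * (l1 \<mu>1 \<mu>2 + l1 \<nu>1 \<nu>2)"
    and LP0: "0 \<le> LP"
  shows "measure_pmf.expectation (act_pmf N \<pi> t xs) (\<lambda>us. measure_pmf.expectation (next_pmf N P xs us)
           (\<lambda>xs'. l1 (emp N xs') (P_MF P (emp N xs) (\<pi> t))))
     \<le> (2 * sqrt (real CARD('x)) + LP * sqrt (real CARD('u))) * ((1 / real (Npop N)) * (\<Sum>k\<in>UNIV. sqrt (real (N k))))"
proof -
  define A where "A = (1 / real (Npop N)) * (\<Sum>k\<in>UNIV. sqrt (real (N k)))"
  define \<mu> where "\<mu> = emp N xs"
  define \<nu> where "\<nu> = nu_MF \<mu> (\<pi> t)"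
  define qq where "qq = (\<lambda>(k,j). \<pi> t k (xs (k,j)) \<mu>)"
  define Q where "Q = act_pmf N \<pi> t xs"
  define R where "R us = next_pmf N P xs us" for us
  define qn where "qn us = (\<lambda>(k,j). P k (xs (k,j)) (us (k,j)) \<mu> (emp N us))" for us
  define G where "G = (\<lambda>(i::'k \<times> nat) u y. pmf (P (fst i) (xs i) u \<mu> \<nu>) y)"
  define M where "M us = (\<lambda>(y,k). (\<Sum>j\<in>{1..N k}. pmf (qn us (k,j)) y) / real (Npop N))" for us
  define M' where "M' us = (\<lambda>(y,k). (\<Sum>j\<in>{1..N k}. G (k,j) (us (k,j)) y) / real (Npop N))" for us
  define Tg where "Tg = P_MF P \<mu> (\<pi> t)"
  have Qe: "Q = Pi_pmf (agents N) undefined qq" by (simp add: Q_def act_eq qq_def \<mu>_def)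
  have Re: "R us = Pi_pmf (agents N) undefined (qn us)" for us
    by (simp add: R_def next_pmf_def qn_def \<mu>_def)
  have intQ[simp]: "integrable (measure_pmf Q) f" for f :: "_ \<Rightarrow> real"
    unfolding Q_def by (rule integrable_measure_pmf_finite[OF act_fin])
  have intR[simp]: "integrable (measure_pmf (R us)) f" for us and f :: "_ \<Rightarrow> real"
    unfolding R_def by (rule integrable_measure_pmf_finite[OF next_fin])
  have ms: "\<mu> \<in> dist_simplex" unfolding \<mu>_def by (rule emp_simplex[OF Npos])
  have ns: "\<nu> \<in> dist_simplex" unfolding \<nu>_def by (rule nu_simplex[OF ms])
  have es: "emp N us \<in> dist_simplex" for us :: "'k \<times> nat \<Rightarrow> 'u" by (rule emp_simplex[OF Npos])
  have i1: "measure_pmf.expectation (R us) (\<lambda>xs'. l1 (emp N xs') (M us)) \<le> sqrt (real CARD('x)) * A" for us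
    unfolding Re M_def A_def by (rule conc_emp)
  have i2: "l1 (M us) (M' us) \<le> LP * l1 (emp N us) \<nu>" for us
  proof -
    have "l1 (M us) (M' us) = (\<Sum>k\<in>UNIV. \<Sum>y\<in>UNIV. \<bar>\<Sum>j\<in>{1..N k}. (pmf (qn us (k,j)) y - G (k,j) (us (k,j)) y)\<bar> / real (Npop N))"
      unfolding M_def M'_def by (rule l1_avg_eq)
    also have "\<dots> \<le> (\<Sum>k\<in>UNIV. \<Sum>y\<in>UNIV. \<Sum>j\<in>{1..N k}. \<bar>pmf (qn us (k,j)) y - G (k,j) (us (k,j)) y\<bar> / real (Npop N))"
      by (intro sum_mono) (simp add: sum_divide_distrib[symmetric] divide_right_mono sum_abs)
    also have "\<dots> = (\<Sum>k\<in>UNIV. \<Sum>j\<in>{1..N k}. (\<Sum>y\<in>UNIV. \<bar>pmf (qn us (k,j)) y - G (k,j) (us (k,j)) y\<bar>) / real (Npop N))"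
      by (intro sum.cong refl) (simp add: sum_divide_distrib[symmetric] sum.swap[of _ "UNIV::'x set"])
    also have "\<dots> \<le> (\<Sum>k\<in>UNIV. \<Sum>j\<in>{1..N k}. LP * l1 (emp N us) \<nu> / real (Npop N))"
    proof (intro sum_mono divide_right_mono)
      fix k j
      have "l1_pmf (P k (xs (k,j)) (us (k,j)) \<mu> (emp N us)) (P k (xs (k,j)) (us (k,j)) \<mu> \<nu>) \<le> LP * (l1 \<mu> \<mu> + l1 (emp N us) \<nu>)"
        using P_lip ms ns es[of us] by blast
      then show "(\<Sum>y\<in>UNIV. \<bar>pmf (qn us (k,j)) y - G (k,j) (us (k,j)) y\<bar>) \<le> LP * l1 (emp N us) \<nu>"
        by (simp add: qn_def G_def l1_pmf_def l1_self)
    qed simp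
    also have "\<dots> = LP * l1 (emp N us) \<nu>"
    proof -
      have h: "(\<Sum>k\<in>UNIV. real (N k)) = real (Npop N)" by (simp add: Npop_def)
      show ?thesis using Npos by (simp add: sum_divide_distrib[symmetric] sum_distrib_right[symmetric] h)
    qed
    finally show ?thesis .
  qed
  have i3: "measure_pmf.expectation Q (\<lambda>us. l1 (M' us) Tg) \<le> sqrt (real CARD('x)) * A"
  proof -
    have Tge: "Tg = (\<lambda>(y,k). (\<Sum>j\<in>{1..N k}. measure_pmf.expectation (qq (k,j)) (\<lambda>u. G (k,j) u y)) / real (Npop N))"
      unfolding Tg_def \<mu>_def by (simp add: PMF_emp exp_fin qq_def G_def \<nu>_def \<mu>_def)
    have "(\<lambda>us. l1 (M' us) Tg) = (\<lambda>us. \<Sum>k\<in>UNIV. \<Sum>y\<in>UNIV. \<bar>\<Sum>j\<in>{1..N k}. (G (k,j) (us (k,j)) y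
        - measure_pmf.expectation (qq (k,j)) (\<lambda>u. G (k,j) u y))\<bar> / real (Npop N))"
      unfolding M'_def Tge by (rule ext, rule l1_avg_eq)
    moreover have "measure_pmf.expectation (Pi_pmf (agents N) undefined qq) (\<lambda>us. \<Sum>k\<in>UNIV. \<Sum>y\<in>UNIV. \<bar>\<Sum>j\<in>{1..N k}. (G (k,j) (us (k,j)) y
        - measure_pmf.expectation (qq (k,j)) (\<lambda>u. G (k,j) u y))\<bar> / real (Npop N)) \<le> sqrt (real CARD('x)) * A"
      unfolding A_def by (rule conc) (auto simp: G_def pmf_sum1)
    ultimately show ?thesis by (simp add: Qe)
  qed
  have i4: "measure_pmf.expectation (R us) (\<lambda>xs'. l1 (emp N xs') Tg)
      \<le> sqrt (real CARD('x)) * A + LP * l1 (emp N us) \<nu> + l1 (M' us) Tg" for us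
  proof -
    have "measure_pmf.expectation (R us) (\<lambda>xs'. l1 (emp N xs') Tg)
       \<le> measure_pmf.expectation (R us) (\<lambda>xs'. l1 (emp N xs') (M us) + (l1 (M us) (M' us) + l1 (M' us) Tg))"
      by (rule integral_mono) (auto intro: order_trans[OF l1_tri add_left_mono[OF l1_tri]])
    also have "\<dots> = measure_pmf.expectation (R us) (\<lambda>xs'. l1 (emp N xs') (M us)) + (l1 (M us) (M' us) + l1 (M' us) Tg)"
      by (simp add: Bochner_Integration.integral_add)
    also have "\<dots> \<le> sqrt (real CARD('x)) * A + (LP * l1 (emp N us) \<nu> + l1 (M' us) Tg)"
      by (intro add_mono i1 i2 order_refl)
    finally show ?thesis by simp
  qed
  have "measure_pmf.expectation Q (\<lambda>us. measure_pmf.expectation (R us) (\<lambda>xs'. l1 (emp N xs') Tg))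
     \<le> measure_pmf.expectation Q (\<lambda>us. sqrt (real CARD('x)) * A + LP * l1 (emp N us) \<nu> + l1 (M' us) Tg)"
    by (rule integral_mono) (auto intro: i4)
  also have "\<dots> = sqrt (real CARD('x)) * A + LP * measure_pmf.expectation Q (\<lambda>us. l1 (emp N us) \<nu>)
      + measure_pmf.expectation Q (\<lambda>us. l1 (M' us) Tg)"
    by (simp add: Bochner_Integration.integral_add)
  also have "\<dots> \<le> sqrt (real CARD('x)) * A + LP * (sqrt (real CARD('u)) * A) + sqrt (real CARD('x)) * A"
  proof (intro add_mono order_refl i3 mult_left_mono LP0)
    show "measure_pmf.expectation Q (\<lambda>us. l1 (emp N us) \<nu>) \<le> sqrt (real CARD('u)) * A"
      unfolding Q_def \<nu>_def \<mu>_def A_def by (rule act_conc)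
  qed
  also have "\<dots> = (2 * sqrt (real CARD('x)) + LP * sqrt (real CARD('u))) * A"
    by (simp add: algebra_simps)
  finally show ?thesis by (simp add: Q_def R_def Tg_def \<mu>_def A_def)
qed



primrec state_dist :: "('k::finite \<Rightarrow> nat) \<Rightarrow> ('x,'u,'k) trans \<Rightarrow> ('x,'u,'k) policy
    \<Rightarrow> ('k \<times> nat \<Rightarrow> 'x) \<Rightarrow> nat \<Rightarrow> ('k \<times> nat \<Rightarrow> 'x) pmf" where
  "state_dist N P \<pi> x0 0 = return_pmf x0"
| "state_dist N P \<pi> x0 (Suc t) = bind_pmf (joint_dist N P \<pi> x0 t) (\<lambda>(xs, us). next_pmf N P xs us)"

lemma jd_eq: "joint_dist N P \<pi> x0 t = bind_pmf (state_dist N P \<pi> x0 t) (\<lambda>xs. map_pmf (\<lambda>us. (xs, us)) (act_pmf N \<pi> t xs))"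
proof (cases t)
  case 0 then show ?thesis by (simp add: bind_return_pmf)
next
  case (Suc s)
  then show ?thesis by (simp add: bind_assoc_pmf split_def)
qed

lemma sd_suc: "state_dist N P \<pi> x0 (Suc t) =
   bind_pmf (state_dist N P \<pi> x0 t) (\<lambda>xs. bind_pmf (act_pmf N \<pi> t xs) (\<lambda>us. next_pmf N P xs us))"
  by (simp add: jd_eq bind_assoc_pmf bind_map_pmf)

lemma sd_fin: "finite (set_pmf (state_dist (N::'k::finite \<Rightarrow> nat) (P::('x::finite,'u::finite,'k) trans) \<pi> x0 t))"
proof (induction t)
  case 0 then show ?case by simp
next
  case (Suc t)
  then show ?case unfolding sd_suc by (simp add: set_bind_pmf act_fin next_fin)
qed

lemma mf_simplex:
  assumes "\<mu>0 \<in> dist_simplex"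
  shows "mf_seq P \<mu>0 (\<pi>::('x::finite,'u::finite,'k::finite) policy) t \<in> dist_simplex"
  by (induction t) (auto simp: assms P_simplex)

lemma l1_le2:
  assumes f: "f \<in> dist_simplex" and g: "g \<in> dist_simplex"
  shows "l1 f g \<le> 2"
proof -
  have "l1 f g \<le> (\<Sum>z\<in>UNIV. f z + g z)"
    unfolding l1_def
  proof (rule sum_mono)
    fix z show "\<bar>f z - g z\<bar> \<le> f z + g z" using simplex_nonneg[OF f, of z] simplex_nonneg[OF g, of z] by arith
  qed
  also have "\<dots> = 2" using f g by (simp add: sum.distrib dist_simplex_def)
  finally show ?thesis .
qed

lemma rMF_bound:
  assumes m: "\<mu> \<in> dist_simplex"
    and rb: "\<forall>k x u \<mu> \<nu>. \<mu> \<in> dist_simplex \<longrightarrow> \<nu> \<in> dist_simplex \<longrightarrow> \<bar>r k x u \<mu> \<nu>\<bar> \<le> MR"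
  shows "\<bar>r_MF r k \<mu> (pt::'k::finite \<Rightarrow> 'x::finite \<Rightarrow> ('x,'k) dmeas \<Rightarrow> 'u::finite pmf)\<bar> \<le> real CARD('x) * real CARD('u) * MR"
proof -
  have n: "nu_MF \<mu> pt \<in> dist_simplex" by (rule nu_simplex[OF m])
  have le1: "\<mu> z \<le> 1" for z
  proof -
    have "\<mu> z \<le> (\<Sum>z\<in>UNIV. \<mu> z)" by (rule member_le_sum) (auto intro: simplex_nonneg[OF m])
    then show ?thesis using m by (simp add: dist_simplex_def)
  qed
  have "\<bar>r_MF r k \<mu> pt\<bar> \<le> (\<Sum>x\<in>UNIV. \<Sum>u\<in>UNIV. \<bar>\<mu> (x, k) * pmf (pt k x \<mu>) u * r k x u \<mu> (nu_MF \<mu> pt)\<bar>)"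
    unfolding r_MF_def by (intro order_trans[OF sum_abs] sum_mono sum_abs)
  also have "\<dots> \<le> (\<Sum>x\<in>(UNIV::'x set). \<Sum>u\<in>(UNIV::'u set). MR)"
  proof (intro sum_mono)
    fix x u
    have a: "\<bar>r k x u \<mu> (nu_MF \<mu> pt)\<bar> \<le> MR" using rb m n by blast
    have b: "\<mu> (x, k) * pmf (pt k x \<mu>) u \<le> 1"
      using le1[of "(x,k)"] pmf_le_1[of "pt k x \<mu>" u] simplex_nonneg[OF m, of "(x,k)"]
      by (simp add: mult_le_one)
    have "\<bar>\<mu> (x, k) * pmf (pt k x \<mu>) u * r k x u \<mu> (nu_MF \<mu> pt)\<bar> =
        (\<mu> (x, k) * pmf (pt k x \<mu>) u) * \<bar>r k x u \<mu> (nu_MF \<mu> pt)\<bar>"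
      using simplex_nonneg[OF m, of "(x,k)"] by (simp add: abs_mult)
    also have "\<dots> \<le> 1 * MR"
      using a b simplex_nonneg[OF m, of "(x,k)"] by (intro mult_mono) auto
    finally show "\<bar>\<mu> (x, k) * pmf (pt k x \<mu>) u * r k x u \<mu> (nu_MF \<mu> pt)\<bar> \<le> MR" by simp
  qed
  finally show ?thesis by simp
qed

theorem theorem1:
  fixes N :: "'k::finite \<Rightarrow> nat"
    and P :: "('x::finite,'u::finite,'k) trans"
    and r :: "('x,'u,'k) rew"
    and MR LR LP LQ \<gamma> :: real
    and x0 :: "'k \<times> nat \<Rightarrow> 'x"
    and \<pi> :: "('x,'u,'k) policy"
  assumes N_pos: "\<forall>k. 1 \<le> N k"
    and MR_pos: "MR > 0" and LR_pos: "LR > 0" and LP_pos: "LP > 0" and LQ_pos: "LQ > 0"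
    and gamma: "0 \<le> \<gamma>" "\<gamma> < 1"
    and r_bound: "\<forall>k x u \<mu> \<nu>. \<mu> \<in> dist_simplex \<longrightarrow> \<nu> \<in> dist_simplex \<longrightarrow> \<bar>r k x u \<mu> \<nu>\<bar> \<le> MR"
    and r_lip: "\<forall>k x u \<mu>1 \<mu>2 \<nu>1 \<nu>2. \<mu>1 \<in> dist_simplex \<longrightarrow> \<mu>2 \<in> dist_simplex \<longrightarrow> \<nu>1 \<in> dist_simplex \<longrightarrow> \<nu>2 \<in> dist_simplex \<longrightarrow>
        \<bar>r k x u \<mu>1 \<nu>1 - r k x u \<mu>2 \<nu>2\<bar> \<le> LR * (l1 \<mu>1 \<mu>2 + l1 \<nu>1 \<nu>2)"
    and P_lip: "\<forall>k x u \<mu>1 \<mu>2 \<nu>1 \<nu>2. \<mu>1 \<in> dist_simplex \<longrightarrow> \<mu>2 \<in> dist_simplex \<longrightarrow> \<nu>1 \<in> dist_simplex \<longrightarrow> \<nu>2 \<in> dist_simplex \<longrightarrow>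
        l1_pmf (P k x u \<mu>1 \<nu>1) (P k x u \<mu>2 \<nu>2) \<le> LP * (l1 \<mu>1 \<mu>2 + l1 \<nu>1 \<nu>2)"
    and contr: "\<gamma> * ((1 + LQ) + LP * (2 + LQ)) < 1"
    and pi_in: "\<pi> \<in> Pi_class LQ"
  shows "(let SR = MR * (1 + LQ) + LR * (2 + LQ);
              SP = (1 + LQ) + LP * (2 + LQ);
              CR = MR + LR;
              CP = 2 + LP;
              A = (1 / real (Npop N)) * (\<Sum>k\<in>UNIV. sqrt (real (N k)))
          in \<bar>vN N P r \<gamma> x0 \<pi> - vMF P r \<gamma> (emp N x0) \<pi>\<bar>
             \<le> CR / (1 - \<gamma>) * sqrt (real CARD('u)) * A
               + CP * (SR / (SP - 1)) * sqrt (real CARD('x) * real CARD('u)) * A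
                 * (1 / (1 - \<gamma> * SP) - 1 / (1 - \<gamma>)))"
proof -
  define SR where "SR = MR * (1 + LQ) + LR * (2 + LQ)"
  define SP where "SP = (1 + LQ) + LP * (2 + LQ)"
  define CR where "CR = MR + LR"
  define CP where "CP = 2 + LP"
  define A where "A = (1 / real (Npop N)) * (\<Sum>k\<in>UNIV. sqrt (real (N k)))"
  have Npos: "0 < Npop N" by (rule Npop_pos[OF N_pos])
  have LQ0: "0 \<le> LQ" and LR0: "0 \<le> LR" and LP0: "0 \<le> LP" and MR0: "0 \<le> MR"
    using LQ_pos LR_pos LP_pos MR_pos by auto
  have A0: "0 \<le> A" unfolding A_def by (auto intro!: sum_nonneg divide_nonneg_nonneg)
  have SP1: "1 < SP" unfolding SP_def using LQ_pos LP_pos by (simp add: add_pos_pos)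
  have SR0: "0 \<le> SR" unfolding SR_def using LQ0 LR0 MR0 by simp
  have ptL: "l1_pmf (\<pi> t k x \<mu>1) (\<pi> t k x \<mu>2) \<le> LQ * l1 \<mu>1 \<mu>2"
    if "\<mu>1 \<in> dist_simplex" "\<mu>2 \<in> dist_simplex" for t k x \<mu>1 \<mu>2
    using pi_in that by (simp add: Pi_class_def)
  define \<mu>t where "\<mu>t t = mf_seq P (emp N x0) \<pi> t" for t
  have x0s: "emp N x0 \<in> dist_simplex" by (rule emp_simplex[OF Npos])
  have mts: "\<mu>t t \<in> dist_simplex" for t unfolding \<mu>t_def by (rule mf_simplex[OF x0s])
  define S where "S t = state_dist N P \<pi> x0 t" for t
  have intS[simp]: "integrable (measure_pmf (S t)) f" for t and f :: "_ \<Rightarrow> real"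
    unfolding S_def by (rule integrable_measure_pmf_finite[OF sd_fin])
  define e where "e t = measure_pmf.expectation (S t) (\<lambda>xs. l1 (emp N xs) (\<mu>t t))" for t
  define c where "c = CP * sqrt (real CARD('x) * real CARD('u)) * A"
  have U1: "1 \<le> real CARD('u)" and X1: "1 \<le> real CARD('x)"
    by (simp_all add: Suc_leI)
  have cbound: "(2 * sqrt (real CARD('x)) + LP * sqrt (real CARD('u))) * A \<le> c"
  proof -
    have sx: "sqrt (real CARD('x)) \<le> sqrt (real CARD('x) * real CARD('u))"
      using U1 X1 by (intro real_sqrt_le_mono) simp
    have su: "sqrt (real CARD('u)) \<le> sqrt (real CARD('x) * real CARD('u))"
      using U1 X1 by (intro real_sqrt_le_mono) simp
    have "2 * sqrt (real CARD('x)) + LP * sqrt (real CARD('u)) \<le> CP * sqrt (real CARD('x) * real CARD('u))"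
      unfolding CP_def using sx su mult_left_mono[OF su LP0] by (simp only: distrib_right)
    then show ?thesis unfolding c_def using A0 by (intro mult_right_mono) auto
  qed
  have b2: "\<bar>l1 (emp N xs) (\<mu>t t)\<bar> \<le> 2" for xs t
    using l1_le2[OF emp_simplex[OF Npos] mts] l1_nonneg by (simp add: l1_nonneg)
  have e_rec: "e (Suc t) \<le> SP * e t + c" for t
  proof -
    define H where "H xs = measure_pmf.expectation (act_pmf N \<pi> t xs) (\<lambda>us.
        measure_pmf.expectation (next_pmf N P xs us) (\<lambda>xs'. l1 (emp N xs') (\<mu>t (Suc t))))" for xs
    have "e (Suc t) = measure_pmf.expectation (S t) H"
      unfolding e_def S_def sd_suc H_def
      by (subst integral_bind_pmf_bdd[OF b2], subst integral_bind_pmf_bdd[OF b2]) (rule refl)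
    also have "\<dots> \<le> measure_pmf.expectation (S t) (\<lambda>xs. c + SP * l1 (emp N xs) (\<mu>t t))"
    proof (rule integral_mono)
      fix xs :: "'k \<times> nat \<Rightarrow> 'x"
      have es: "emp N xs \<in> dist_simplex" by (rule emp_simplex[OF Npos])
      define K where "K = l1 (P_MF P (emp N xs) (\<pi> t)) (\<mu>t (Suc t))"
      have K: "K \<le> SP * l1 (emp N xs) (\<mu>t t)"
        unfolding K_def \<mu>t_def mf_seq.simps SP_def
        by (rule PMF_lip[OF es mts[unfolded \<mu>t_def] ptL[OF es mts[unfolded \<mu>t_def]] LQ0 P_lip LP0])
      have intA: "integrable (measure_pmf (act_pmf N \<pi> t xs)) f" for f :: "_ \<Rightarrow> real"
        by (rule integrable_measure_pmf_finite[OF act_fin])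
      have intN: "integrable (measure_pmf (next_pmf N P xs us)) f" for us and f :: "_ \<Rightarrow> real"
        by (rule integrable_measure_pmf_finite[OF next_fin])
      have "H xs \<le> measure_pmf.expectation (act_pmf N \<pi> t xs) (\<lambda>us.
          measure_pmf.expectation (next_pmf N P xs us) (\<lambda>xs'. l1 (emp N xs') (P_MF P (emp N xs) (\<pi> t)) + K))"
        unfolding H_def
        by (intro integral_mono intA intN) (auto simp: K_def intro: l1_tri)
      also have "\<dots> = measure_pmf.expectation (act_pmf N \<pi> t xs) (\<lambda>us.
          measure_pmf.expectation (next_pmf N P xs us) (\<lambda>xs'. l1 (emp N xs') (P_MF P (emp N xs) (\<pi> t)))) + K"
        by (simp add: Bochner_Integration.integral_add intA intN)
      also have "\<dots> \<le> (2 * sqrt (real CARD('x)) + LP * sqrt (real CARD('u))) * A + K"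
        unfolding A_def by (intro add_right_mono cond_trans[OF Npos P_lip LP0])
      also have "\<dots> \<le> c + SP * l1 (emp N xs) (\<mu>t t)"
        using cbound K by linarith
      finally show "H xs \<le> c + SP * l1 (emp N xs) (\<mu>t t)" .
    qed auto
    also have "\<dots> = c + SP * e t"
      by (simp add: e_def)
    finally show ?thesis by simp
  qed
  have e_bound: "e t \<le> c * (SP ^ t - 1) / (SP - 1)" for t
  proof (induction t)
    case 0
    then show ?case by (simp add: e_def S_def \<mu>t_def l1_self)
  next
    case (Suc t)
    have eq: "SP * (c * (SP ^ t - 1) / (SP - 1)) + c = c * (SP ^ Suc t - 1) / (SP - 1)"
      using SP1 by (simp add: field_simps)
    have "SP * e t \<le> SP * (c * (SP ^ t - 1) / (SP - 1))"
      using Suc.IH SP1 by (intro mult_left_mono) auto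
    then show ?case using e_rec[of t] eq by linarith
  qed
  define Xr where "Xr k j t = measure_pmf.expectation (joint_dist N P \<pi> x0 t)
      (\<lambda>(xs, us). r k (xs (k, j)) (us (k, j)) (emp N xs) (emp N us))" for k j t
  define Rn where "Rn t = (1 / real (Npop N)) * (\<Sum>k\<in>UNIV. \<Sum>j\<in>{1..N k}. Xr k j t)" for t
  define Rm where "Rm t = (\<Sum>k\<in>UNIV. r_MF r k (\<mu>t t) (\<pi> t))" for t
  have rb: "\<bar>r k x u (emp N xs) (emp N us)\<bar> \<le> MR" for k x u and xs :: "'k \<times> nat \<Rightarrow> 'x" and us :: "'k \<times> nat \<Rightarrow> 'u"
    using r_bound emp_simplex[OF Npos, of xs] emp_simplex[OF Npos, of us] by blast
  have Xr_bd: "\<bar>Xr k j t\<bar> \<le> MR" for k j t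
    unfolding Xr_def by (rule exp_bdd) (auto simp: rb split: prod.split)
  have reward: "\<bar>Rn t - Rm t\<bar> \<le> CR * sqrt (real CARD('u)) * A + SR * e t" for t
  proof -
    define h where "h xs = (1 / real (Npop N)) * (\<Sum>k\<in>UNIV. \<Sum>j\<in>{1..N k}.
        measure_pmf.expectation (act_pmf N \<pi> t xs) (\<lambda>us. r k (xs (k,j)) (us (k,j)) (emp N xs) (emp N us)))" for xs
    have Xr_eq: "Xr k j t = measure_pmf.expectation (S t) (\<lambda>xs.
        measure_pmf.expectation (act_pmf N \<pi> t xs) (\<lambda>us. r k (xs (k,j)) (us (k,j)) (emp N xs) (emp N us)))" for k j
    proof -
      have bd: "\<bar>(\<lambda>(xs, us). r k (xs (k, j)) (us (k, j)) (emp N xs) (emp N us)) z\<bar> \<le> MR" for z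
        by (auto simp: rb split: prod.split)
      show ?thesis unfolding Xr_def jd_eq S_def
        by (subst integral_bind_pmf_bdd[OF bd]) simp
    qed
    have Rn_eq: "Rn t = measure_pmf.expectation (S t) h"
      unfolding Rn_def h_def Xr_eq
      by (simp add: Bochner_Integration.integral_sum)
    have pw: "\<bar>h xs - Rm t\<bar> \<le> CR * sqrt (real CARD('u)) * A + SR * l1 (emp N xs) (\<mu>t t)" for xs
    proof -
      have es: "emp N xs \<in> dist_simplex" by (rule emp_simplex[OF Npos])
      have h1: "\<bar>h xs - (\<Sum>k\<in>UNIV. r_MF r k (emp N xs) (\<pi> t))\<bar> \<le> LR * (sqrt (real CARD('u)) * A)"
        unfolding h_def A_def by (rule cond_reward[OF Npos r_lip LR0])
      have h2: "\<bar>(\<Sum>k\<in>UNIV. r_MF r k (emp N xs) (\<pi> t)) - Rm t\<bar> \<le> SR * l1 (emp N xs) (\<mu>t t)"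
        unfolding Rm_def SR_def
        by (rule rMF_lip[OF es mts ptL[OF es mts] LQ0 r_bound r_lip MR0 LR0])
      have h3: "LR * (sqrt (real CARD('u)) * A) \<le> CR * sqrt (real CARD('u)) * A"
        unfolding CR_def using MR0 A0 by (simp add: algebra_simps)
      show ?thesis using h1 h2 h3 by linarith
    qed
    have "\<bar>Rn t - Rm t\<bar> = \<bar>measure_pmf.expectation (S t) (\<lambda>xs. h xs - Rm t)\<bar>"
      by (simp add: Rn_eq Bochner_Integration.integral_diff)
    also have "\<dots> \<le> measure_pmf.expectation (S t) (\<lambda>xs. \<bar>h xs - Rm t\<bar>)"
      by (rule integral_abs_bound)
    also have "\<dots> \<le> measure_pmf.expectation (S t) (\<lambda>xs. CR * sqrt (real CARD('u)) * A + SR * l1 (emp N xs) (\<mu>t t))"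
      by (rule integral_mono) (auto intro: pw)
    also have "\<dots> = CR * sqrt (real CARD('u)) * A + SR * e t"
      by (simp add: e_def)
    finally show ?thesis .
  qed
  have g0: "0 \<le> \<gamma>" and g1: "\<gamma> < 1" using gamma by auto
  have gSP0: "0 \<le> \<gamma> * SP" using g0 SP1 by simp
  have gSP1: "\<gamma> * SP < 1" using contr by (simp add: SP_def)
  have geo: "summable (\<lambda>t. C * \<gamma> ^ t)" for C :: real
    using g0 g1 by (intro summable_mult summable_geometric) auto
  have cmp: "summable (\<lambda>t. \<gamma> ^ t * F t)" if "\<And>t. \<bar>F t\<bar> \<le> C" for F :: "nat \<Rightarrow> real" and C
  proof (rule summable_comparison_test[OF _ geo[of C]])
    have "norm (\<gamma> ^ n * F n) \<le> C * \<gamma> ^ n" for n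
    proof -
      have "norm (\<gamma> ^ n * F n) = \<bar>F n\<bar> * \<gamma> ^ n" using g0 by (simp add: abs_mult)
      also have "\<dots> \<le> C * \<gamma> ^ n" by (rule mult_right_mono[OF that]) (simp add: g0)
      finally show ?thesis .
    qed
    then show "\<exists>N0. \<forall>n\<ge>N0. norm (\<gamma> ^ n * F n) \<le> C * \<gamma> ^ n" by blast
  qed
  have Xr_summ: "summable (\<lambda>t. \<gamma> ^ t * Xr k j t)" for k j
    by (rule cmp) (rule Xr_bd)
  have rm_summ: "summable (\<lambda>t. \<gamma> ^ t * r_MF r k (\<mu>t t) (\<pi> t))" for k
    by (rule cmp) (rule rMF_bound[OF mts r_bound])
  have vN_eq: "vN N P r \<gamma> x0 \<pi> = (\<Sum>t. \<gamma> ^ t * Rn t)"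
  proof -
    have inner: "(\<Sum>j\<in>{1..N k}. \<Sum>t. \<gamma> ^ t * Xr k j t) = (\<Sum>t. \<Sum>j\<in>{1..N k}. \<gamma> ^ t * Xr k j t)" for k
      by (rule suminf_sum[symmetric]) (rule Xr_summ)
    have outer: "(\<Sum>k\<in>UNIV. \<Sum>t. \<Sum>j\<in>{1..N k}. \<gamma> ^ t * Xr k j t) = (\<Sum>t. \<Sum>k\<in>UNIV. \<Sum>j\<in>{1..N k}. \<gamma> ^ t * Xr k j t)"
      by (rule suminf_sum[symmetric]) (intro summable_sum Xr_summ)
    have sm: "summable (\<lambda>t. \<Sum>k\<in>UNIV. \<Sum>j\<in>{1..N k}. \<gamma> ^ t * Xr k j t)"
      by (intro summable_sum Xr_summ)
    have "vN N P r \<gamma> x0 \<pi> = (1 / real (Npop N)) * (\<Sum>k\<in>UNIV. \<Sum>j\<in>{1..N k}. \<Sum>t. \<gamma> ^ t * Xr k j t)"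
      by (simp add: vN_def Xr_def)
    also have "\<dots> = (1 / real (Npop N)) * (\<Sum>t. \<Sum>k\<in>UNIV. \<Sum>j\<in>{1..N k}. \<gamma> ^ t * Xr k j t)"
      by (simp only: inner outer)
    also have "\<dots> = (\<Sum>t. (1 / real (Npop N)) * (\<Sum>k\<in>UNIV. \<Sum>j\<in>{1..N k}. \<gamma> ^ t * Xr k j t))"
      by (rule suminf_mult[OF sm, symmetric])
    also have "\<dots> = (\<Sum>t. \<gamma> ^ t * Rn t)"
      by (simp add: Rn_def sum_distrib_left mult.left_commute)
    finally show ?thesis .
  qed
  have vMF_eq: "vMF P r \<gamma> (emp N x0) \<pi> = (\<Sum>t. \<gamma> ^ t * Rm t)"
  proof -
    have "vMF P r \<gamma> (emp N x0) \<pi> = (\<Sum>k\<in>UNIV. \<Sum>t. \<gamma> ^ t * r_MF r k (\<mu>t t) (\<pi> t))"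
      by (simp add: vMF_def \<mu>t_def)
    also have "\<dots> = (\<Sum>t. \<Sum>k\<in>UNIV. \<gamma> ^ t * r_MF r k (\<mu>t t) (\<pi> t))"
      by (rule suminf_sum[symmetric]) (rule rm_summ)
    also have "\<dots> = (\<Sum>t. \<gamma> ^ t * Rm t)"
      by (simp add: Rm_def sum_distrib_left)
    finally show ?thesis .
  qed
  have sRn: "summable (\<lambda>t. \<gamma> ^ t * Rn t)"
  proof -
    have "(\<lambda>t. \<gamma> ^ t * Rn t) = (\<lambda>t. (1 / real (Npop N)) * (\<Sum>k\<in>UNIV. \<Sum>j\<in>{1..N k}. \<gamma> ^ t * Xr k j t))"
      by (simp add: Rn_def sum_distrib_left mult.left_commute)
    then show ?thesis by (simp only:) (intro summable_mult summable_sum Xr_summ)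
  qed
  have sRm: "summable (\<lambda>t. \<gamma> ^ t * Rm t)"
    unfolding Rm_def sum_distrib_left by (intro summable_sum rm_summ)
  define a where "a = CR * sqrt (real CARD('u)) * A"
  define bb where "bb = SR * c / (SP - 1)"
  define B where "B t = \<gamma> ^ t * (a + SR * (c * (SP ^ t - 1) / (SP - 1)))" for t
  define V where "V = a / (1 - \<gamma>) + bb / (1 - \<gamma> * SP) - bb / (1 - \<gamma>)"
  have Bb: "\<bar>\<gamma> ^ t * (Rn t - Rm t)\<bar> \<le> B t" for t
  proof -
    have "\<bar>Rn t - Rm t\<bar> \<le> a + SR * (c * (SP ^ t - 1) / (SP - 1))"
      using reward[of t] mult_left_mono[OF e_bound[of t] SR0] unfolding a_def by linarith
    then show ?thesis unfolding B_def using g0 by (simp add: abs_mult mult_left_mono)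
  qed
  have Bsums: "B sums V"
  proof -
    have ne: "SP - 1 \<noteq> 0" using SP1 by simp
    have Beq0: "B t = a * \<gamma> ^ t + bb * (\<gamma> * SP) ^ t - bb * \<gamma> ^ t" for t
    proof -
      have h: "SR * (c * (SP ^ t - 1) / (SP - 1)) = bb * (SP ^ t - 1)" by (simp add: bb_def)
      show ?thesis unfolding B_def h power_mult_distrib by (simp add: algebra_simps)
    qed
    have Beq: "B = (\<lambda>t. a * \<gamma> ^ t + bb * (\<gamma> * SP) ^ t - bb * \<gamma> ^ t)"
      by (rule ext) (rule Beq0)
    have s1: "(\<lambda>t. \<gamma> ^ t) sums (1 / (1 - \<gamma>))" using g0 g1 by (intro geometric_sums) auto
    have s2: "(\<lambda>t. (\<gamma> * SP) ^ t) sums (1 / (1 - \<gamma> * SP))" using gSP0 gSP1 by (intro geometric_sums) auto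
    have "(\<lambda>t. a * \<gamma> ^ t + bb * (\<gamma> * SP) ^ t - bb * \<gamma> ^ t) sums (a * (1 / (1 - \<gamma>)) + bb * (1 / (1 - \<gamma> * SP)) - bb * (1 / (1 - \<gamma>)))"
      by (intro sums_diff sums_add sums_mult s1 s2)
    then show ?thesis unfolding Beq V_def by simp
  qed
  have sabs: "summable (\<lambda>t. \<bar>\<gamma> ^ t * (Rn t - Rm t)\<bar>)"
    by (rule summable_comparison_test[OF _ sums_summable[OF Bsums]]) (auto intro: Bb)
  have "\<bar>vN N P r \<gamma> x0 \<pi> - vMF P r \<gamma> (emp N x0) \<pi>\<bar> = \<bar>\<Sum>t. \<gamma> ^ t * (Rn t - Rm t)\<bar>"
    unfolding vN_eq vMF_eq using suminf_diff[OF sRn sRm] by (simp add: right_diff_distrib)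
  also have "\<dots> \<le> (\<Sum>t. \<bar>\<gamma> ^ t * (Rn t - Rm t)\<bar>)" by (rule summable_rabs[OF sabs])
  also have "\<dots> \<le> (\<Sum>t. B t)" by (rule suminf_le[OF Bb sabs sums_summable[OF Bsums]])
  also have "\<dots> = V" using Bsums by (rule sums_unique[symmetric])
  also have "\<dots> = CR / (1 - \<gamma>) * sqrt (real CARD('u)) * A
      + CP * (SR / (SP - 1)) * sqrt (real CARD('x) * real CARD('u)) * A * (1 / (1 - \<gamma> * SP) - 1 / (1 - \<gamma>))"
  proof -
    have h1: "a / (1 - \<gamma>) = CR / (1 - \<gamma>) * sqrt (real CARD('u)) * A" by (simp add: a_def)
    have h2: "bb = CP * (SR / (SP - 1)) * sqrt (real CARD('x) * real CARD('u)) * A" by (simp add: bb_def c_def)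
    have "V = a / (1 - \<gamma>) + bb * (1 / (1 - \<gamma> * SP) - 1 / (1 - \<gamma>))"
      by (simp add: V_def right_diff_distrib)
    then show ?thesis by (simp only: h1 h2)
  qed
  finally show ?thesis by (simp only: Let_def SR_def SP_def CR_def CP_def A_def)
qed

end
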